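(* Let $(\Omega,\mathfrak S,\mathbb P,\{T_z:z\in\mathcal G\})$ be a measurable ergodic dynamical system, $\ell\ge0$, and $F\in\mathcal K$. Then for each $\xi\in\mathbb Q^d\cap\mathcal U$ and $z_{1,\ell},\bar z_{1,\ell}\in\mathcal R^\ell$, \[\lim_{n\to\infty}\max_{(a_1,\dots,a_n)\in\mathcal A_n(\xi,z_{1,\ell},\bar z_{1,\ell})}\Big|\frac1n\sum_{i=0}^{n-1}F(\eta_i,a_{i+1})\Big|=0\] in $L^1(\mathbb P)$ and for $\mathbb P$-a.e. $\omega$, where $\eta_0=(\omega,z_{1,\ell})$ and $\eta_i=S_{a_i}\eta_{i-1}$.
   Context: Fix $d$, finite $\mathcal R\subset\mathbb Z^d$, $\mathcal G$ the additive subgroup generated by $\mathcal R$; $T_z$ ($z\in\mathcal G$) measurable commuting bijections with $T_{x+y}=T_xT_y$, $T_0=\mathrm{id}$, $\mathbb P$ invariant and ergodic; $\mathbb E$ expectation. $\Omega_\ell=\Omega\times\mathcal R^\ell$, elements $\eta=(\omega,z_{1,\ell})$ with $z_{i,j}=(z_i,\dots,z_j)$; $S_z(\omega,z_{1,\ell})=(T_{z_1}\omega,(z_{2,\ell},z))$ ($S_z\omega=T_z\omega$ if $\ell=0$). Class $\mathcal K$: measurable $F:\Omega_\ell\times\mathcal R\to\mathbb R$ with (i) $F(\cdot,z_{1,\ell},z)\in L^1(\mathbb P)$; (ii) for all $n\ge\ell$ and $a_{1,n}\in\mathcal R^n$, with $\eta_0=(\omega,a_{n-\ell+1,n})$, $\eta_i=S_{a_i}\eta_{i-1}$: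 $\mathbb E[\sum_{i=0}^{n-1}F(\eta_i,a_{i+1})]=0$; (iii) for a.e. $\omega$, any two step sequences $a_{1,n}$, $\bar a_{1,m}$ from a common start $\eta_0=\bar\eta_0=(\omega,z_{1,\ell})$ with $\eta_n=\bar\eta_m$ give equal sums $\sum_{i<n}F(\eta_i,a_{i+1})=\sum_{j<m}F(\bar\eta_j,\bar a_{j+1})$. $\mathcal U$ is the convex hull of $\mathcal R$; $D_n=\{z_1+\dots+z_n:z_{1,n}\in\mathcal R^n\}$. For each rational $\xi\in\mathcal U$ an integer $b(\xi)\ge1$ with $b(\xi)\xi\in D_{b(\xi)}$ and a path $\hat x_n(\xi)$ with $\hat x_0(\xi)=0$, steps in $\mathcal R$, and $\hat x_{jb(\xi)}(\xi)=jb(\xi)\xi$ are fixed. $\mathcal A_n(\xi,z_{1,\ell},\bar z_{1,\ell})$ is the set of $(a_1,\dots,a_n)\in\mathcal R^n$ with $z_1+\dots+z_\ell+a_1+\dots+a_{n-\ell}=\hat x_n(\xi)$ and $a_{n-\ell+1,n}=\bar z_{1,\ell}$. *)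

theory Defs
  imports "HOL-Probability.Probability"
begin

type_synonym 'd zvec = "int ^ 'd"

definition vec_of_int :: "int ^ 'd \<Rightarrow> real ^ 'd" where
  "vec_of_int z = (\<chi> i. real_of_int (z $ i))"

inductive_set gen_group :: "(int ^ 'd) set \<Rightarrow> (int ^ 'd) set" for R where
  gen_zero: "0 \<in> gen_group R"
| gen_base: "z \<in> R \<Longrightarrow> z \<in> gen_group R"
| gen_add: "x \<in> gen_group R \<Longrightarrow> y \<in> gen_group R \<Longrightarrow> x + y \<in> gen_group R"
| gen_neg: "x \<in> gen_group R \<Longrightarrow> - x \<in> gen_group R"

definition ergodic_system ::
    "'a measure \<Rightarrow> (int ^ 'd) set \<Rightarrow> (int ^ 'd \<Rightarrow> 'a \<Rightarrow> 'a) \<Rightarrow> bool" where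
  "ergodic_system M R T \<longleftrightarrow>
     prob_space M \<and>
     (\<forall>z\<in>gen_group R. T z \<in> M \<rightarrow>\<^sub>M M \<and> bij_betw (T z) (space M) (space M)
                         \<and> distr M M (T z) = M) \<and>
     (\<forall>\<omega>\<in>space M. T 0 \<omega> = \<omega>) \<and>
     (\<forall>x\<in>gen_group R. \<forall>y\<in>gen_group R. \<forall>\<omega>\<in>space M. T (x + y) \<omega> = T x (T y \<omega>)) \<and>
     (\<forall>A\<in>sets M. (\<forall>z\<in>gen_group R. T z -` A \<inter> space M = A)
                  \<longrightarrow> measure M A = 0 \<or> measure M A = 1)"

text \<open>The shift S_z on Omega_l = Omega x R^l; elements of R^l are lists of length l.
  For l = 0 (empty list) it is just T_z.\<close>
fun shiftS :: "(int ^ 'd \<Rightarrow> 'a \<Rightarrow> 'a) \<Rightarrow> int ^ 'd \<Rightarrow> 'a \<times> (int ^ 'd) list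
                 \<Rightarrow> 'a \<times> (int ^ 'd) list" where
  "shiftS T z (\<omega>, []) = (T z \<omega>, [])"
| "shiftS T z (\<omega>, z1 # zs) = (T z1 \<omega>, zs @ [z])"

text \<open>The path eta_0 = eta0, eta_(i+1) = S_(a_(i+1)) eta_i; the step list a is 0-indexed,
  i.e. a ! i is the paper's a_(i+1).\<close>
fun eta :: "(int ^ 'd \<Rightarrow> 'a \<Rightarrow> 'a) \<Rightarrow> 'a \<times> (int ^ 'd) list \<Rightarrow> (int ^ 'd) list
              \<Rightarrow> nat \<Rightarrow> 'a \<times> (int ^ 'd) list" where
  "eta T e0 a 0 = e0"
| "eta T e0 a (Suc i) = shiftS T (a ! i) (eta T e0 a i)"

definition path_sum ::
    "(int ^ 'd \<Rightarrow> 'a \<Rightarrow> 'a) \<Rightarrow> ('a \<times> (int ^ 'd) list \<Rightarrow> int ^ 'd \<Rightarrow> real)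
     \<Rightarrow> 'a \<times> (int ^ 'd) list \<Rightarrow> (int ^ 'd) list \<Rightarrow> real" where
  "path_sum T F e0 a = (\<Sum>i<length a. F (eta T e0 a i) (a ! i))"

definition classK ::
    "'a measure \<Rightarrow> (int ^ 'd) set \<Rightarrow> (int ^ 'd \<Rightarrow> 'a \<Rightarrow> 'a) \<Rightarrow> nat
     \<Rightarrow> ('a \<times> (int ^ 'd) list \<Rightarrow> int ^ 'd \<Rightarrow> real) \<Rightarrow> bool" where
  "classK M R T l F \<longleftrightarrow>
     (\<forall>zs z. set zs \<subseteq> R \<and> length zs = l \<and> z \<in> R \<longrightarrow> integrable M (\<lambda>\<omega>. F (\<omega>, zs) z)) \<and>
     (\<forall>n a. n \<ge> l \<and> length a = n \<and> set a \<subseteq> R \<longrightarrow>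
        integral\<^sup>L M (\<lambda>\<omega>. path_sum T F (\<omega>, drop (n - l) a) a) = 0) \<and>
     (AE \<omega> in M. \<forall>zs a a'. set zs \<subseteq> R \<and> length zs = l \<and> set a \<subseteq> R \<and> set a' \<subseteq> R \<and>
        eta T (\<omega>, zs) a (length a) = eta T (\<omega>, zs) a' (length a') \<longrightarrow>
        path_sum T F (\<omega>, zs) a = path_sum T F (\<omega>, zs) a')"

definition Dn :: "(int ^ 'd) set \<Rightarrow> nat \<Rightarrow> (int ^ 'd) set" where
  "Dn R n = {sum_list a | a. length a = n \<and> set a \<subseteq> R}"

definition rat_vec :: "real ^ 'd \<Rightarrow> bool" where
  "rat_vec \<xi> \<longleftrightarrow> (\<forall>i. \<xi> $ i \<in> \<rat>)"

text \<open>The set A_n(xi, zs, zbar), for the fixed path xhat = xhat(xi) (given as a function of n).\<close>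
definition An :: "(int ^ 'd) set \<Rightarrow> nat \<Rightarrow> (nat \<Rightarrow> int ^ 'd) \<Rightarrow> nat
                  \<Rightarrow> (int ^ 'd) list \<Rightarrow> (int ^ 'd) list \<Rightarrow> (int ^ 'd) list set" where
  "An R l xhat n zs zbar =
     {a. length a = n \<and> set a \<subseteq> R \<and>
         sum_list zs + sum_list (take (n - l) a) = xhat n \<and> drop (n - l) a = zbar}"

text \<open>max over A_n of |(1/n) sum_(i<n) F(eta_i,a_(i+1))|, with eta_0 = (omega, zs);
  by convention the max over an empty set is 0 (all values are nonnegative).\<close>
definition max_avg ::
    "(int ^ 'd) set \<Rightarrow> nat \<Rightarrow> (int ^ 'd \<Rightarrow> 'a \<Rightarrow> 'a)
     \<Rightarrow> ('a \<times> (int ^ 'd) list \<Rightarrow> int ^ 'd \<Rightarrow> real) \<Rightarrow> (nat \<Rightarrow> int ^ 'd)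
     \<Rightarrow> (int ^ 'd) list \<Rightarrow> (int ^ 'd) list \<Rightarrow> nat \<Rightarrow> 'a \<Rightarrow> real" where
  "max_avg R l T F xhat zs zbar n \<omega> =
     Max (insert 0 ((\<lambda>a. \<bar>path_sum T F (\<omega>, zs) a / real n\<bar>) ` An R l xhat n zs zbar))"

end

theory Submission
  imports Defs
begin

lemma gen_group_sum_list: "set xs \<subseteq> R \<Longrightarrow> sum_list xs \<in> gen_group R"
proof (induction xs)
  case Nil then show ?case by (simp add: gen_zero)
next
  case (Cons a xs) then show ?case by (simp add: gen_add gen_base)
qed

lemma gen_group_diff: "x \<in> gen_group R \<Longrightarrow> y \<in> gen_group R \<Longrightarrow> x - y \<in> gen_group R"
  using gen_add[OF _ gen_neg] by (metis diff_conv_add_uminus)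

lemma gen_group_nat_mult: "v \<in> gen_group R \<Longrightarrow> (of_nat k :: int^'d) * v \<in> gen_group R"
proof (induction k)
  case 0 then show ?case by (simp add: gen_zero)
next
  case (Suc k)
  have "(of_nat (Suc k) :: int^'d) * v = v + of_nat k * v" by (simp add: distrib_right)
  then show ?case using Suc gen_add by metis
qed

locale erg =
  fixes M :: "'a measure" and R :: "(int ^ 'd) set" and T :: "int ^ 'd \<Rightarrow> 'a \<Rightarrow> 'a"
  assumes sys: "ergodic_system M R T" and finR: "finite R"
begin

abbreviation "G \<equiv> gen_group R"

lemma sys_parts:
  "prob_space M"
  "\<forall>z\<in>gen_group R. T z \<in> M \<rightarrow>\<^sub>M M \<and> bij_betw (T z) (space M) (space M) \<and> distr M M (T z) = M"
  "\<forall>\<omega>\<in>space M. T 0 \<omega> = \<omega>"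
  "\<forall>x\<in>gen_group R. \<forall>y\<in>gen_group R. \<forall>\<omega>\<in>space M. T (x + y) \<omega> = T x (T y \<omega>)"
  "\<forall>A\<in>sets M. (\<forall>z\<in>gen_group R. T z -` A \<inter> space M = A) \<longrightarrow> measure M A = 0 \<or> measure M A = 1"
  using sys unfolding ergodic_system_def by blast+

lemma prob: "prob_space M" by (rule sys_parts(1))

sublocale prob_space M by (rule prob)

lemma Tmeas: "x \<in> G \<Longrightarrow> T x \<in> M \<rightarrow>\<^sub>M M"
  using sys_parts(2) by (elim ballE conjE) auto

lemma Tdistr: "x \<in> G \<Longrightarrow> distr M M (T x) = M"
  using sys_parts(2) by (elim ballE conjE) auto

lemma T0: "\<omega> \<in> space M \<Longrightarrow> T 0 \<omega> = \<omega>"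
  using sys_parts(3) by (elim ballE) auto

lemma Tadd: "x \<in> G \<Longrightarrow> y \<in> G \<Longrightarrow> \<omega> \<in> space M \<Longrightarrow> T (x + y) \<omega> = T x (T y \<omega>)"
  using sys_parts(4) by simp

lemma Tspace: "x \<in> G \<Longrightarrow> \<omega> \<in> space M \<Longrightarrow> T x \<omega> \<in> space M"
  using Tmeas measurable_space by metis

lemma erg: "A \<in> sets M \<Longrightarrow> (\<And>z. z \<in> G \<Longrightarrow> T z -` A \<inter> space M = A) \<Longrightarrow> measure M A = 0 \<or> measure M A = 1"
  using sys_parts(5) by simp

lemma countable_G: "countable G"
proof -
  have "countable (UNIV :: (int^'d) set)" by simp
  then show ?thesis using countable_subset by blast
qed

lemma emeasure_T: "x \<in> G \<Longrightarrow> A \<in> sets M \<Longrightarrow> emeasure M (T x -` A \<inter> space M) = emeasure M A"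
  by (metis Tdistr Tmeas emeasure_distr)

lemma measure_T: "x \<in> G \<Longrightarrow> A \<in> sets M \<Longrightarrow> measure M (T x -` A \<inter> space M) = measure M A"
  by (simp add: emeasure_T measure_def)

lemma AE_T:
  assumes x: "x \<in> G" and ae: "AE \<omega> in M. P \<omega>"
  shows "AE \<omega> in M. P (T x \<omega>)"
proof -
  from ae obtain N where N: "N \<in> null_sets M" "{\<omega>\<in>space M. \<not> P \<omega>} \<subseteq> N"
    by (auto simp: eventually_ae_filter)
  have m: "T x -` N \<inter> space M \<in> sets M"
    using measurable_sets[OF Tmeas[OF x] null_setsD2[OF N(1)]] .
  have "emeasure M (T x -` N \<inter> space M) = 0"
    using emeasure_T[OF x null_setsD2[OF N(1)]] null_setsD1[OF N(1)] by simp
  then have nul: "T x -` N \<inter> space M \<in> null_sets M" using m by blast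
  have sub: "{\<omega>\<in>space M. \<not> P (T x \<omega>)} \<subseteq> T x -` N \<inter> space M"
  proof
    fix \<omega> assume "\<omega> \<in> {\<omega>\<in>space M. \<not> P (T x \<omega>)}"
    then have "\<omega> \<in> space M" "\<not> P (T x \<omega>)" by auto
    then have "T x \<omega> \<in> N" using N(2) Tspace[OF x] by blast
    then show "\<omega> \<in> T x -` N \<inter> space M" using \<open>\<omega> \<in> space M\<close> by blast
  qed
  show ?thesis by (rule AE_I'[OF nul sub])
qed

lemma integrable_T:
  fixes f :: "'a \<Rightarrow> real"
  assumes x: "x \<in> G" and f: "integrable M f"
  shows "integrable M (\<lambda>\<omega>. f (T x \<omega>))"
proof -
  have "integrable (distr M M (T x)) f" unfolding Tdistr[OF x] by (rule f)
  then show ?thesis using integrable_distr_eq[OF Tmeas[OF x] borel_measurable_integrable[OF f]] by blast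
qed

lemma integral_T:
  fixes f :: "'a \<Rightarrow> real"
  assumes x: "x \<in> G" and f: "f \<in> borel_measurable M"
  shows "integral\<^sup>L M (\<lambda>\<omega>. f (T x \<omega>)) = integral\<^sup>L M f"
  using integral_distr[OF Tmeas[OF x] f] Tdistr[OF x] by simp

lemma nn_integral_T:
  fixes f :: "'a \<Rightarrow> ennreal"
  assumes x: "x \<in> G" and f: "f \<in> borel_measurable M"
  shows "(\<integral>\<^sup>+\<omega>. f (T x \<omega>) \<partial>M) = (\<integral>\<^sup>+\<omega>. f \<omega> \<partial>M)"
  using nn_integral_distr[OF Tmeas[OF x], of f] f Tdistr[OF x] by simp

end

lemma sum_lessThan_add: "(\<Sum>i<m+n. f i) = (\<Sum>i<m. f i) + (\<Sum>i<n. f (m+i))"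
  for f :: "nat \<Rightarrow> 'b::comm_monoid_add"
  by (induction n) (auto simp: add.assoc)

lemma eta_append1: "i \<le> length a \<Longrightarrow> eta T e (a @ b) i = eta T e a i"
  by (induction i) (auto simp: nth_append)

lemma eta_append2: "i \<le> length b \<Longrightarrow> eta T e (a @ b) (length a + i) = eta T (eta T e a (length a)) b i"
proof (induction i)
  case 0 then show ?case by (simp add: eta_append1)
next
  case (Suc i) then show ?case by (simp add: nth_append)
qed

lemma path_sum_append:
  "path_sum T F e (a @ b) = path_sum T F e a + path_sum T F (eta T e a (length a)) b"
proof -
  have "path_sum T F e (a @ b) = (\<Sum>i<length a + length b. F (eta T e (a@b) i) ((a@b) ! i))"
    by (simp add: path_sum_def)
  also have "\<dots> = (\<Sum>i<length a. F (eta T e (a@b) i) ((a@b) ! i)) + (\<Sum>i<length b. F (eta T e (a@b) (length a + i)) ((a@b) ! (length a + i)))"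
    by (rule sum_lessThan_add)
  also have "(\<Sum>i<length a. F (eta T e (a@b) i) ((a@b) ! i)) = path_sum T F e a"
    unfolding path_sum_def by (intro sum.cong) (auto simp: eta_append1 nth_append)
  also have "(\<Sum>i<length b. F (eta T e (a@b) (length a + i)) ((a@b) ! (length a + i))) = path_sum T F (eta T e a (length a)) b"
    unfolding path_sum_def by (intro sum.cong) (auto simp: eta_append2 nth_append)
  finally show ?thesis .
qed

lemma path_sum_neg: "path_sum T (\<lambda>e z. - F e z) e a = - path_sum T F e a"
  by (simp add: path_sum_def sum_negf)

context erg
begin

lemma eta_formula:
  assumes w: "set w \<subseteq> R" and p: "set p \<subseteq> R" and om: "\<omega> \<in> space M"
  shows "i \<le> length p \<Longrightarrow> eta T (\<omega>, w) p i = (T (sum_list (take i (w @ p))) \<omega>, take (length w) (drop i (w @ p)))"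
proof (induction i)
  case 0 then show ?case using om by (simp add: T0)
next
  case (Suc i)
  then have ip: "i < length p" by simp
  have IH: "eta T (\<omega>, w) p i = (T (sum_list (take i (w @ p))) \<omega>, take (length w) (drop i (w @ p)))"
    using Suc by simp
  have setwp: "set (w @ p) \<subseteq> R" using w p by simp
  have s_in: "sum_list (take i (w @ p)) \<in> G"
    using setwp by (intro gen_group_sum_list) (meson order_trans set_take_subset)
  have pi: "p ! i \<in> R" using p ip by (meson nth_mem subsetD)
  have wpi_in: "(w @ p) ! i \<in> R" using setwp ip by (intro subsetD[OF setwp] nth_mem) simp
  have tk: "take (Suc i) (w @ p) = take i (w @ p) @ [(w @ p) ! i]"
    using ip by (intro take_Suc_conv_app_nth) simp
  show ?case
  proof (cases w)
    case Nil
    have "T (sum_list (take (Suc i) p)) \<omega> = T (p ! i + sum_list (take i p)) \<omega>"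
      using ip by (simp add: take_Suc_conv_app_nth add.commute)
    also have "\<dots> = T (p ! i) (T (sum_list (take i p)) \<omega>)"
      using Tadd[OF gen_base[OF pi] _ om] s_in Nil by simp
    finally show ?thesis using IH Nil by simp
  next
    case (Cons w1 ws)
    have dr: "drop i (w @ p) = (w @ p) ! i # drop (Suc i) (w @ p)"
      using ip by (intro Cons_nth_drop_Suc[symmetric]) simp
    have tl1: "take (length w) (drop i (w @ p)) = (w @ p) ! i # take (length ws) (drop (Suc i) (w @ p))"
      using Cons dr by simp
    have tl2: "take (length w) (drop (Suc i) (w @ p)) = take (length ws) (drop (Suc i) (w @ p)) @ [p ! i]"
    proof -
      have "length ws < length (drop (Suc i) (w @ p))" using ip Cons by simp
      then have "take (Suc (length ws)) (drop (Suc i) (w @ p)) = take (length ws) (drop (Suc i) (w @ p)) @ [drop (Suc i) (w @ p) ! length ws]"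
        by (rule take_Suc_conv_app_nth)
      moreover have "drop (Suc i) (w @ p) ! length ws = p ! i"
      proof -
        have "drop (Suc i) (w @ p) ! length ws = (w @ p) ! (Suc i + length ws)"
          using ip Cons by (intro nth_drop) simp
        also have "\<dots> = p ! i" using Cons by (simp add: nth_append)
        finally show ?thesis .
      qed
      ultimately show ?thesis using Cons by simp
    qed
    have e1: "sum_list (take (Suc i) (w @ p)) = sum_list (take i (w @ p)) + (w @ p) ! i"
      unfolding tk by simp
    have "T (sum_list (take (Suc i) (w @ p))) \<omega> = T ((w @ p) ! i + sum_list (take i (w @ p))) \<omega>"
      using e1 by (metis add.commute)
    also have "\<dots> = T ((w @ p) ! i) (T (sum_list (take i (w @ p))) \<omega>)"
      using Tadd[OF gen_base[OF wpi_in] s_in om] by simp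
    finally have pos: "T (sum_list (take (Suc i) (w @ p))) \<omega> = T ((w @ p) ! i) (T (sum_list (take i (w @ p))) \<omega>)" .
    show ?thesis using IH tl1 tl2 pos by simp
  qed
qed

lemma eta_end_ge:
  assumes w: "set w \<subseteq> R" and p: "set p \<subseteq> R" and om: "\<omega> \<in> space M" and len: "length w \<le> length p"
  shows "eta T (\<omega>, w) p (length p) = (T (sum_list w + sum_list (take (length p - length w) p)) \<omega>, drop (length p - length w) p)"
proof -
  have "take (length p) (w @ p) = w @ take (length p - length w) p" using len by simp
  moreover have "drop (length p) (w @ p) = drop (length p - length w) p" using len by simp
  moreover have "length (drop (length p - length w) p) = length w" using len by simp
  ultimately show ?thesis using eta_formula[OF w p om, of "length p"] by simp
qed

end

locale kset = erg M R T for M :: "'a measure" and R :: "(int ^ 'd) set" and T +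
  fixes l :: nat and F :: "'a \<times> (int ^ 'd) list \<Rightarrow> int ^ 'd \<Rightarrow> real"
  assumes K: "classK M R T l F"
begin

lemma K_int: "set w \<subseteq> R \<Longrightarrow> length w = l \<Longrightarrow> z \<in> R \<Longrightarrow> integrable M (\<lambda>\<omega>. F (\<omega>, w) z)"
  using K unfolding classK_def by blast

lemma K_mean: "l \<le> length a \<Longrightarrow> set a \<subseteq> R \<Longrightarrow>
    integral\<^sup>L M (\<lambda>\<omega>. path_sum T F (\<omega>, drop (length a - l) a) a) = 0"
  using K unfolding classK_def by blast

lemma K_coc: "AE \<omega> in M. \<forall>zs a a'. set zs \<subseteq> R \<and> length zs = l \<and> set a \<subseteq> R \<and> set a' \<subseteq> R \<and>
        eta T (\<omega>, zs) a (length a) = eta T (\<omega>, zs) a' (length a') \<longrightarrow>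
        path_sum T F (\<omega>, zs) a = path_sum T F (\<omega>, zs) a'"
  using K unfolding classK_def by blast

definition "W = {w. set w \<subseteq> R \<and> length w = l}"

lemma finW: "finite W"
  unfolding W_def using finite_lists_length_eq[OF finR] by simp

definition "Phi \<omega> = (\<Sum>w\<in>W. \<Sum>z\<in>R. \<bar>F (\<omega>, w) z\<bar>)"

lemma Phi_nonneg: "Phi \<omega> \<ge> 0"
  unfolding Phi_def by (intro sum_nonneg) auto

lemma Phi_int: "integrable M Phi"
  unfolding Phi_def
  by (intro Bochner_Integration.integrable_sum integrable_abs K_int) (auto simp: W_def)

lemma F_le_Phi: "w \<in> W \<Longrightarrow> z \<in> R \<Longrightarrow> \<bar>F (\<omega>, w) z\<bar> \<le> Phi \<omega>"
proof -
  assume a: "w \<in> W" "z \<in> R"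
  have "\<bar>F (\<omega>, w) z\<bar> \<le> (\<Sum>z\<in>R. \<bar>F (\<omega>, w) z\<bar>)"
    using a finR by (intro member_le_sum) auto
  also have "\<dots> \<le> Phi \<omega>"
    unfolding Phi_def using a finW by (intro member_le_sum[of w W "\<lambda>w. \<Sum>z\<in>R. \<bar>F (\<omega>, w) z\<bar>"]) (auto intro: sum_nonneg)
  finally show ?thesis .
qed

lemma path_sum_expand:
  assumes w: "set w \<subseteq> R" "length w = l" and p: "set p \<subseteq> R" and om: "\<omega> \<in> space M"
  shows "path_sum T F (\<omega>, w) p = (\<Sum>i<length p. F (T (sum_list (take i (w @ p))) \<omega>, take l (drop i (w @ p))) (p ! i))"
  unfolding path_sum_def using eta_formula[OF w(1) p om] w(2) by (intro sum.cong) auto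

lemma take_drop_W:
  assumes w: "set w \<subseteq> R" "length w = l" and p: "set p \<subseteq> R" and i: "i \<le> length p"
  shows "take l (drop i (w @ p)) \<in> W"
proof -
  have A: "set (take l (drop i (w @ p))) \<subseteq> set (w @ p)"
    by (meson order_trans set_drop_subset set_take_subset)
  have B: "set (w @ p) \<subseteq> R" using w p by simp
  have "set (take l (drop i (w @ p))) \<subseteq> R" using A B by (rule order_trans)
  moreover have "length (take l (drop i (w @ p))) = l" using w i by simp
  ultimately show ?thesis by (simp add: W_def)
qed

lemma path_sum_bound:
  assumes w: "set w \<subseteq> R" "length w = l" and p: "set p \<subseteq> R" and om: "\<omega> \<in> space M"
  shows "\<bar>path_sum T F (\<omega>, w) p\<bar> \<le> (\<Sum>i<length p. Phi (T (sum_list (take i (w @ p))) \<omega>))"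
proof -
  have "\<bar>path_sum T F (\<omega>, w) p\<bar> \<le> (\<Sum>i<length p. \<bar>F (T (sum_list (take i (w @ p))) \<omega>, take l (drop i (w @ p))) (p ! i)\<bar>)"
    unfolding path_sum_expand[OF w p om] by (rule sum_abs)
  also have "\<dots> \<le> (\<Sum>i<length p. Phi (T (sum_list (take i (w @ p))) \<omega>))"
    using w p by (intro sum_mono F_le_Phi take_drop_W) (auto intro: nth_mem)
  finally show ?thesis .
qed

lemma take_sum_G: "set w \<subseteq> R \<Longrightarrow> set p \<subseteq> R \<Longrightarrow> sum_list (take i (w @ p)) \<in> G"
  using set_take_subset[of i "w @ p"] by (intro gen_group_sum_list) auto

lemma path_sum_int:
  assumes w: "set w \<subseteq> R" "length w = l" and p: "set p \<subseteq> R"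
  shows "integrable M (\<lambda>\<omega>. path_sum T F (\<omega>, w) p)"
proof -
  have "integrable M (\<lambda>\<omega>. \<Sum>i<length p. F (T (sum_list (take i (w @ p))) \<omega>, take l (drop i (w @ p))) (p ! i))"
  proof (intro Bochner_Integration.integrable_sum)
    fix i assume "i \<in> {..<length p}"
    then have i: "i < length p" by simp
    have "take l (drop i (w @ p)) \<in> W" using take_drop_W[OF w p] i by simp
    then have "integrable M (\<lambda>\<omega>. F (\<omega>, take l (drop i (w @ p))) (p ! i))"
      using p i by (intro K_int) (auto simp: W_def intro: nth_mem)
    then show "integrable M (\<lambda>\<omega>. F (T (sum_list (take i (w @ p))) \<omega>, take l (drop i (w @ p))) (p ! i))"
      using integrable_T[OF take_sum_G[OF w(1) p]] by blast
  qed
  moreover have eq: "\<And>\<omega>. \<omega> \<in> space M \<Longrightarrow> path_sum T F (\<omega>, w) p = (\<Sum>i<length p. F (T (sum_list (take i (w @ p))) \<omega>, take l (drop i (w @ p))) (p ! i))"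
    by (rule path_sum_expand[OF w p])
  ultimately show ?thesis
    using Bochner_Integration.integrable_cong[OF refl, of M "\<lambda>\<omega>. path_sum T F (\<omega>, w) p"
        "\<lambda>\<omega>. \<Sum>i<length p. F (T (sum_list (take i (w @ p))) \<omega>, take l (drop i (w @ p))) (p ! i)"] eq
    by simp
qed

end

definition cpow :: "'x list \<Rightarrow> nat \<Rightarrow> 'x list" where
  "cpow c k = concat (replicate k c)"

lemma cpow_0[simp]: "cpow c 0 = []" by (simp add: cpow_def)
lemma cpow_Suc: "cpow c (Suc k) = c @ cpow c k" by (simp add: cpow_def)
lemma cpow_add: "cpow c (m + n) = cpow c m @ cpow c n"
  by (induction m) (auto simp: cpow_Suc)
lemma cpow_Suc': "cpow c (Suc k) = cpow c k @ c"
  using cpow_add[of c k 1] by (simp add: cpow_Suc)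
lemma length_cpow[simp]: "length (cpow c k) = k * length c"
  by (induction k) (auto simp: cpow_Suc)
lemma set_cpow: "set (cpow c k) \<subseteq> set c"
  by (induction k) (auto simp: cpow_Suc)
lemma sum_cpow: "sum_list (cpow c k) = (of_nat k :: int^'d) * sum_list c"
  by (induction k) (auto simp: cpow_Suc distrib_right)

lemma sum_take_drop: "sum_list (take n xs) + sum_list (drop n xs) = sum_list xs"
  by (metis append_take_drop_id sum_list_append)

locale blk = kset M R T l F for M :: "'a measure" and R :: "(int ^ 'd) set" and T l F +
  fixes b :: nat and c :: "(int^'d) list"
  assumes b_pos: "b \<ge> 1" and len_c: "length c = b" and set_c: "set c \<subseteq> R"
begin

declare len_c[simp]

definition "v = sum_list c"
definition "L = drop (l * b - l) (cpow c l)"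
definition "phi \<omega> = path_sum T F (\<omega>, L) c"
definition "Bk k \<omega> = (\<Sum>i<k. phi (T (of_nat i * v) \<omega>))"

lemma v_G: "v \<in> G" unfolding v_def by (rule gen_group_sum_list[OF set_c])
lemma kv_G: "(of_nat k :: int^'d) * v \<in> G" by (rule gen_group_nat_mult[OF v_G])

lemma set_cpowR: "set (cpow c k) \<subseteq> R" by (rule order_trans[OF set_cpow set_c])
lemma sum_cpowv: "sum_list (cpow c k) = of_nat k * v" unfolding v_def by (rule sum_cpow)
lemma length_cpowb[simp]: "length (cpow c k) = k * b" by (simp add: len_c)

lemma lb: "l \<le> l * b" using b_pos by simp

lemma len_L: "length L = l" unfolding L_def using lb by (simp add: len_c)
lemma set_L: "set L \<subseteq> R" unfolding L_def by (rule order_trans[OF set_drop_subset set_cpowR])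
lemma L_W: "L \<in> W" using len_L set_L by (simp add: W_def)

lemma last_app_cpow: "drop (length (q @ cpow c l) - l) (q @ cpow c l) = L"
proof -
  have "length (q @ cpow c l) - l = length q + (l * b - l)" using lb by simp
  then show ?thesis unfolding L_def by simp
qed

lemma last_cpow: "l \<le> k \<Longrightarrow> drop (length (cpow c k) - l) (cpow c k) = L"
proof -
  assume "l \<le> k"
  then have "cpow c k = cpow c (k - l) @ cpow c l" using cpow_add[of c "k - l" l] by simp
  then show ?thesis using last_app_cpow[of "cpow c (k - l)"] by simp
qed

lemma drop_L_c: "drop b (L @ c) = L"
proof -
  have "L @ c = drop (l * b - l) (cpow c l @ c)" unfolding L_def using lb by simp
  also have "\<dots> = drop (l * b - l) (cpow c (Suc l))" by (simp add: cpow_Suc')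
  finally have "drop b (L @ c) = drop (l * b - l + b) (cpow c (Suc l))" by (simp add: add.commute)
  also have "l * b - l + b = length (cpow c (Suc l)) - l" using lb by simp
  also have "drop \<dots> (cpow c (Suc l)) = L" by (rule last_cpow) simp
  finally show ?thesis .
qed

lemma block_step: "\<omega> \<in> space M \<Longrightarrow> eta T (\<omega>, L) c b = (T v \<omega>, L)"
proof -
  assume om: "\<omega> \<in> space M"
  have "eta T (\<omega>, L) c b = (T (sum_list (take b (L @ c))) \<omega>, take (length L) (drop b (L @ c)))"
    using eta_formula[OF set_L set_c om, of b] len_c by simp
  moreover have "sum_list (take b (L @ c)) = v"
  proof -
    have e1: "sum_list (take b (L @ c)) + sum_list L = sum_list L + v"
      using sum_take_drop[of b "L @ c"] unfolding drop_L_c v_def sum_list_append .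
    then show ?thesis by (simp add: add.commute)
  qed
  ultimately show ?thesis using drop_L_c len_L by simp
qed

lemma eta_end_append: "eta T e (a @ q) (length (a @ q)) = eta T (eta T e a (length a)) q (length q)"
  using eta_append2[of "length q" q T e a] by simp

lemma T_kv: "\<omega> \<in> space M \<Longrightarrow> T v (T (of_nat k * v) \<omega>) = T (of_nat (Suc k) * v) \<omega>"
proof -
  assume om: "\<omega> \<in> space M"
  have "T v (T (of_nat k * v) \<omega>) = T (v + of_nat k * v) \<omega>" using Tadd[OF v_G kv_G om] by simp
  also have "v + of_nat k * v = (of_nat (Suc k) :: int^'d) * v" by (simp add: distrib_right)
  finally show ?thesis .
qed

lemma cpow_path:
  assumes om: "\<omega> \<in> space M"
  shows "eta T (\<omega>, L) (cpow c k) (length (cpow c k)) = (T (of_nat k * v) \<omega>, L) \<and>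
         path_sum T F (\<omega>, L) (cpow c k) = Bk k \<omega>"
proof (induction k)
  case 0 then show ?case using om by (simp add: T0 Bk_def path_sum_def)
next
  case (Suc k)
  have sp: "T (of_nat k * v) \<omega> \<in> space M" using Tspace[OF kv_G om] .
  have "eta T (\<omega>, L) (cpow c (Suc k)) (length (cpow c (Suc k))) = eta T (T (of_nat k * v) \<omega>, L) c (length c)"
    unfolding cpow_Suc' eta_end_append using Suc by simp
  also have "\<dots> = (T (of_nat (Suc k) * v) \<omega>, L)"
    using block_step[OF sp] len_c T_kv[OF om] by simp
  finally have e: "eta T (\<omega>, L) (cpow c (Suc k)) (length (cpow c (Suc k))) = (T (of_nat (Suc k) * v) \<omega>, L)" .
  have "path_sum T F (\<omega>, L) (cpow c (Suc k)) = Bk k \<omega> + phi (T (of_nat k * v) \<omega>)"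
    unfolding cpow_Suc' path_sum_append using Suc by (simp add: phi_def)
  then show ?case using e by (simp add: Bk_def)
qed

lemma PS_cpow: "\<omega> \<in> space M \<Longrightarrow> path_sum T F (\<omega>, L) (cpow c k) = Bk k \<omega>"
  using cpow_path by blast

lemma eta_cpow: "\<omega> \<in> space M \<Longrightarrow> eta T (\<omega>, L) (cpow c k) (k * b) = (T (of_nat k * v) \<omega>, L)"
  using cpow_path[of \<omega> k] by simp

lemma phi_int: "integrable M phi"
  unfolding phi_def using path_sum_int[OF set_L len_L set_c] .

lemma phi_mean: "integral\<^sup>L M phi = 0"
proof -
  let ?a = "cpow c (Suc l)"
  have la: "length ?a = b + l * b" by simp
  have "l \<le> length ?a" unfolding la using lb by linarith
  moreover have "drop (length ?a - l) ?a = L" by (rule last_cpow) simp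
  ultimately have "integral\<^sup>L M (\<lambda>\<omega>. path_sum T F (\<omega>, L) ?a) = 0"
    using K_mean[of ?a] set_cpowR by simp
  moreover have "integral\<^sup>L M (\<lambda>\<omega>. path_sum T F (\<omega>, L) ?a) = integral\<^sup>L M (Bk (Suc l))"
    using PS_cpow by (intro Bochner_Integration.integral_cong) auto
  moreover have "integral\<^sup>L M (Bk (Suc l)) = (\<Sum>i<Suc l. integral\<^sup>L M (\<lambda>\<omega>. phi (T (of_nat i * v) \<omega>)))"
    unfolding Bk_def by (rule Bochner_Integration.integral_sum) (intro integrable_T[OF kv_G phi_int])
  moreover have "\<And>i. integral\<^sup>L M (\<lambda>\<omega>. phi (T (of_nat i * v) \<omega>)) = integral\<^sup>L M phi"
    by (rule integral_T[OF kv_G borel_measurable_integrable[OF phi_int]])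
  ultimately show ?thesis by simp
qed

lemma Bk_int: "integrable M (Bk k)"
  unfolding Bk_def by (intro Bochner_Integration.integrable_sum integrable_T[OF kv_G phi_int])

end

lemma count_min: "(\<Sum>k<N. if k < K then 1 else (0::real)) = real (min N K)"
  by (induction N) (auto simp: min_def)

lemma count_bound:
  fixes x eps :: real assumes e: "eps > 0" and x: "x \<ge> 0"
  shows "(\<Sum>k<N. if eps * real k < x then 1 else (0::real)) \<le> 1 + x / eps"
proof -
  define K where "K = nat \<lceil>x / eps\<rceil>"
  have "(\<Sum>k<N. if eps * real k < x then 1 else (0::real)) \<le> (\<Sum>k<N. if k < K then 1 else (0::real))"
  proof (intro sum_mono)
    fix k assume "k \<in> {..<N}"
    show "(if eps * real k < x then 1 else (0::real)) \<le> (if k < K then 1 else 0)"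
    proof (cases "eps * real k < x")
      case True
      then have "real k < x / eps" using e by (simp add: field_simps)
      also have "\<dots> \<le> real_of_int \<lceil>x / eps\<rceil>" by (rule le_of_int_ceiling)
      finally have "k < K" unfolding K_def by linarith
      then show ?thesis by simp
    qed simp
  qed
  also have "\<dots> = real (min N K)" by (rule count_min)
  also have "\<dots> \<le> real K" by simp
  also have "real K \<le> 1 + x / eps"
    unfolding K_def using x e ceiling_correct[of "x/eps"] by (simp add: of_nat_nat)
  finally show ?thesis .
qed

context erg
begin

lemma BC:
  fixes psi :: "'a \<Rightarrow> real"
  assumes v: "v \<in> G" and psi: "integrable M psi" and pos: "\<And>\<omega>. psi \<omega> \<ge> 0"
  shows "AE \<omega> in M. (\<lambda>k. psi (T (of_nat k * v) \<omega>) / real k) \<longlonglongrightarrow> 0"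
proof -
  have psim: "psi \<in> borel_measurable M" using psi by (rule borel_measurable_integrable)
  have ev: "AE \<omega> in M. eventually (\<lambda>k. psi (T (of_nat k * v) \<omega>) \<le> real k / real (Suc m)) sequentially" for m
  proof -
    define eps where "eps = 1 / real (Suc m)"
    have e: "eps > 0" unfolding eps_def by simp
    define B where "B k = {\<omega>\<in>space M. eps * real k < psi \<omega>}" for k
    define A where "A k = {\<omega>\<in>space M. eps * real k < psi (T (of_nat k * v) \<omega>)}" for k
    have Bm: "B k \<in> sets M" for k unfolding B_def using psim by measurable
    have AB: "A k = T (of_nat k * v) -` B k \<inter> space M" for k
      unfolding A_def B_def using Tspace[OF gen_group_nat_mult[OF v]] by auto
    have Am: "A k \<in> sets M" for k unfolding AB
      by (rule measurable_sets[OF Tmeas[OF gen_group_nat_mult[OF v]] Bm])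
    have mAB: "measure M (A k) = measure M (B k)" for k
      unfolding AB by (rule measure_T[OF gen_group_nat_mult[OF v] Bm])
    have "summable (\<lambda>k. measure M (A k))"
    proof (rule summableI_nonneg_bounded)
      fix N
      have "(\<Sum>k<N. measure M (A k)) = (\<Sum>k<N. integral\<^sup>L M (indicator (B k) :: 'a \<Rightarrow> real))"
        using Bm by (simp add: mAB Int_absorb2 sets.sets_into_space)
      also have "\<dots> = integral\<^sup>L M (\<lambda>\<omega>. \<Sum>k<N. (indicator (B k) \<omega> :: real))"
        by (rule Bochner_Integration.integral_sum[symmetric]) (simp add: integrable_indicator_iff Bm Int_absorb2 sets.sets_into_space less_top[symmetric] emeasure_finite)
      also have "\<dots> \<le> integral\<^sup>L M (\<lambda>\<omega>. 1 + psi \<omega> / eps)"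
      proof (rule integral_mono)
        show "integrable M (\<lambda>\<omega>. \<Sum>k<N. (indicator (B k) \<omega> :: real))"
          by (intro Bochner_Integration.integrable_sum) (simp add: integrable_indicator_iff Bm Int_absorb2 sets.sets_into_space less_top[symmetric] emeasure_finite)
        show "integrable M (\<lambda>\<omega>. 1 + psi \<omega> / eps)"
          using psi by (intro Bochner_Integration.integrable_add integrable_divide) auto
        fix \<omega> assume om: "\<omega> \<in> space M"
        have "(\<Sum>k<N. (indicator (B k) \<omega> :: real)) = (\<Sum>k<N. if eps * real k < psi \<omega> then 1 else 0)"
          using om by (intro sum.cong) (auto simp: B_def indicator_def)
        also have "\<dots> \<le> 1 + psi \<omega> / eps" by (rule count_bound[OF e pos])
        finally show "(\<Sum>k<N. (indicator (B k) \<omega> :: real)) \<le> 1 + psi \<omega> / eps" .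
      qed
      finally show "(\<Sum>k<N. measure M (A k)) \<le> integral\<^sup>L M (\<lambda>\<omega>. 1 + psi \<omega> / eps)" .
    qed simp
    then have "AE \<omega> in M. eventually (\<lambda>k. \<omega> \<in> space M - A k) sequentially"
      by (intro borel_cantelli_AE1 Am) (auto simp: less_top[symmetric])
    then show ?thesis
    proof (rule eventually_mono)
      fix \<omega> assume "eventually (\<lambda>k. \<omega> \<in> space M - A k) sequentially"
      then show "eventually (\<lambda>k. psi (T (of_nat k * v) \<omega>) \<le> real k / real (Suc m)) sequentially"
        by (rule eventually_mono) (auto simp: A_def eps_def field_simps)
    qed
  qed
  then have "AE \<omega> in M. \<forall>m. eventually (\<lambda>k. psi (T (of_nat k * v) \<omega>) \<le> real k / real (Suc m)) sequentially"
    by (simp add: AE_all_countable)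
  then show ?thesis
  proof (rule eventually_mono)
    fix \<omega> assume H: "\<forall>m. eventually (\<lambda>k. psi (T (of_nat k * v) \<omega>) \<le> real k / real (Suc m)) sequentially"
    show "(\<lambda>k. psi (T (of_nat k * v) \<omega>) / real k) \<longlonglongrightarrow> 0"
    proof (rule order_tendstoI)
      fix a :: real assume "a < 0"
      then show "eventually (\<lambda>k. a < psi (T (of_nat k * v) \<omega>) / real k) sequentially"
        using pos by (intro always_eventually) (metis divide_nonneg_nonneg less_le_trans of_nat_0_le_iff not_le)
    next
      fix a :: real assume a: "0 < a"
      obtain m where m: "1 / real (Suc m) < a"
        using a by (metis nat_approx_posE)
      have "eventually (\<lambda>k. k \<ge> 1 \<and> psi (T (of_nat k * v) \<omega>) \<le> real k / real (Suc m)) sequentially"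
        using H eventually_ge_at_top[of 1] by (auto intro: eventually_conj)
      then show "eventually (\<lambda>k. psi (T (of_nat k * v) \<omega>) / real k < a) sequentially"
      proof (rule eventually_mono)
        fix k assume k: "k \<ge> 1 \<and> psi (T (of_nat k * v) \<omega>) \<le> real k / real (Suc m)"
        then have "psi (T (of_nat k * v) \<omega>) / real k \<le> 1 / real (Suc m)"
          by (simp add: field_simps)
        then show "psi (T (of_nat k * v) \<omega>) / real k < a" using m by linarith
      qed
    qed
  qed
qed

end

fun mx :: "(nat \<Rightarrow> 'a \<Rightarrow> real) \<Rightarrow> nat \<Rightarrow> 'a \<Rightarrow> real" where
  "mx S 0 \<omega> = S 0 \<omega>"
| "mx S (Suc N) \<omega> = max (mx S N \<omega>) (S (Suc N) \<omega>)"

lemma mx_ge: "k \<le> N \<Longrightarrow> S k \<omega> \<le> mx S N \<omega>"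
  by (induction N) (auto simp: le_Suc_eq max_def)

lemma mx_in: "\<exists>k\<le>N. mx S N \<omega> = S k \<omega>"
  by (induction N) (auto simp: max_def intro: le_SucI)

lemma mx_mono: "mx S N \<omega> \<le> mx S (Suc N) \<omega>" by simp

lemma mx_mono': "N \<le> N' \<Longrightarrow> mx S N \<omega> \<le> mx S N' \<omega>"
  by (induction N' rule: dec_induct) (auto intro: order_trans[OF _ mx_mono])

context erg
begin

lemma maximal_ergodic:
  fixes psi :: "'a \<Rightarrow> real"
  assumes v: "v \<in> G" and psi: "integrable M psi"
    and ae: "AE \<omega> in M. \<exists>k. (\<Sum>i<k. psi (T (of_nat i * v) \<omega>)) > 0"
  shows "integral\<^sup>L M psi \<ge> 0"
proof -
  define S where "S k \<omega> = (\<Sum>i<k. psi (T (of_nat i * v) \<omega>))" for k \<omega>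
  have iv: "(of_nat i :: int^'d) * v \<in> G" for i by (rule gen_group_nat_mult[OF v])
  have S_int: "integrable M (S k)" for k
    unfolding S_def by (intro Bochner_Integration.integrable_sum integrable_T[OF iv psi])
  have S0: "S 0 \<omega> = 0" for \<omega> by (simp add: S_def)
  have S_Suc: "S (Suc k) \<omega> = psi \<omega> + S k (T v \<omega>)" if om: "\<omega> \<in> space M" for k \<omega>
  proof -
    have "S (Suc k) \<omega> = psi (T (of_nat 0 * v) \<omega>) + (\<Sum>i<k. psi (T (of_nat (Suc i) * v) \<omega>))"
      unfolding S_def by (rule sum.lessThan_Suc_shift)
    also have "psi (T (of_nat 0 * v) \<omega>) = psi \<omega>" using om by (simp add: T0)
    also have "(\<Sum>i<k. psi (T (of_nat (Suc i) * v) \<omega>)) = S k (T v \<omega>)"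
      unfolding S_def
    proof (intro sum.cong refl)
      fix i
      have "(of_nat (Suc i) :: int^'d) * v = of_nat i * v + v" by (simp add: distrib_right)
      then show "psi (T (of_nat (Suc i) * v) \<omega>) = psi (T (of_nat i * v) (T v \<omega>))"
        using Tadd[OF iv v om, of i] by simp
    qed
    finally show ?thesis .
  qed
  define Mx where "Mx N = mx S N" for N
  have Mx_int: "integrable M (Mx N)" for N
    unfolding Mx_def by (induction N) (auto intro: S_int)
  have Mx_nonneg: "Mx N \<omega> \<ge> 0" for N \<omega>
    using mx_ge[of 0 N S \<omega>] S0 by (simp add: Mx_def)
  define P where "P N = {\<omega>\<in>space M. Mx N \<omega> > 0}" for N
  have Pm: "P N \<in> sets M" for N
    unfolding P_def using borel_measurable_integrable[OF Mx_int] by measurable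
  have key: "psi \<omega> * indicator (P N) \<omega> \<ge> Mx N \<omega> - Mx N (T v \<omega>)" if om: "\<omega> \<in> space M" for N \<omega>
  proof (cases "Mx N \<omega> > 0")
    case True
    obtain k where k: "k \<le> N" "Mx N \<omega> = S k \<omega>" using mx_in[of N S \<omega>] by (auto simp: Mx_def)
    have "k \<noteq> 0"
    proof
      assume "k = 0" then show False using k True S0[of \<omega>] by simp
    qed
    then obtain k' where k': "k = Suc k'" by (cases k) auto
    have "Mx N \<omega> = psi \<omega> + S k' (T v \<omega>)" using k k' S_Suc[OF om] by simp
    also have "S k' (T v \<omega>) \<le> Mx N (T v \<omega>)" unfolding Mx_def using k k' by (intro mx_ge) simp
    finally show ?thesis using True om by (simp add: P_def)
  next
    case False
    then have "Mx N \<omega> = 0" using Mx_nonneg[of N \<omega>] by simp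
    then show ?thesis using Mx_nonneg[of N "T v \<omega>"] False by (simp add: P_def)
  qed
  have ge0: "integral\<^sup>L M (\<lambda>\<omega>. psi \<omega> * indicator (P N) \<omega>) \<ge> 0" for N
  proof -
    have "integral\<^sup>L M (\<lambda>\<omega>. Mx N \<omega> - Mx N (T v \<omega>)) \<le> integral\<^sup>L M (\<lambda>\<omega>. psi \<omega> * indicator (P N) \<omega>)"
    proof (rule integral_mono)
      show "integrable M (\<lambda>\<omega>. Mx N \<omega> - Mx N (T v \<omega>))"
        using Mx_int integrable_T[OF v Mx_int] by (intro Bochner_Integration.integrable_diff)
      show "integrable M (\<lambda>\<omega>. psi \<omega> * indicator (P N) \<omega>)"
        using integrable_mult_indicator[OF Pm psi] by (simp add: mult.commute)
    qed (rule key)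
    moreover have "integral\<^sup>L M (\<lambda>\<omega>. Mx N \<omega> - Mx N (T v \<omega>)) = 0"
      using Bochner_Integration.integral_diff[OF Mx_int integrable_T[OF v Mx_int]]
        integral_T[OF v borel_measurable_integrable[OF Mx_int]] by simp
    ultimately show ?thesis by simp
  qed
  have lim: "(\<lambda>N. integral\<^sup>L M (\<lambda>\<omega>. psi \<omega> * indicator (P N) \<omega>)) \<longlonglongrightarrow> integral\<^sup>L M psi"
  proof (rule integral_dominated_convergence[where w="\<lambda>\<omega>. norm (psi \<omega>)"])
    show "psi \<in> borel_measurable M" using psi by (rule borel_measurable_integrable)
    show "(\<lambda>\<omega>. psi \<omega> * indicator (P N) \<omega>) \<in> borel_measurable M" for N
      using borel_measurable_integrable[OF psi] Pm by measurable
    show "integrable M (\<lambda>\<omega>. norm (psi \<omega>))" using psi by simp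
    show "AE \<omega> in M. norm (psi \<omega> * indicator (P N) \<omega>) \<le> norm (psi \<omega>)" for N
      by (intro AE_I2) (auto simp: indicator_def)
    show "AE \<omega> in M. (\<lambda>N. psi \<omega> * indicator (P N) \<omega>) \<longlonglongrightarrow> psi \<omega>"
      using eventually_conj[OF AE_space ae]
    proof (rule eventually_mono)
      fix \<omega> assume H: "\<omega> \<in> space M \<and> (\<exists>k. (\<Sum>i<k. psi (T (of_nat i * v) \<omega>)) > 0)"
      then obtain k where k: "S k \<omega> > 0" by (auto simp: S_def)
      have "eventually (\<lambda>N. psi \<omega> * indicator (P N) \<omega> = psi \<omega>) sequentially"
        using eventually_ge_at_top[of k]
      proof (rule eventually_mono)
        fix N assume "k \<le> N"
        then have "Mx N \<omega> > 0" using mx_ge[of k N S \<omega>] k by (simp add: Mx_def)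
        then show "psi \<omega> * indicator (P N) \<omega> = psi \<omega>" using H by (simp add: P_def)
      qed
      then show "(\<lambda>N. psi \<omega> * indicator (P N) \<omega>) \<longlonglongrightarrow> psi \<omega>" by (rule tendsto_eventually)
    qed
  qed
  show ?thesis using lim ge0 by (intro LIMSEQ_le_const[OF lim]) auto
qed

end

lemma limsup_diff_le:
  fixes x y :: "nat \<Rightarrow> real"
  assumes lim: "(\<lambda>k. x k - y k) \<longlonglongrightarrow> 0"
  shows "limsup (\<lambda>k. ereal (x k)) \<le> limsup (\<lambda>k. ereal (y k))"
proof (rule ereal_le_epsilon2)
  fix e :: real assume e: "0 < e"
  have ev: "eventually (\<lambda>k. x k - y k < e) sequentially" using order_tendstoD(2)[OF lim e] .
  have "limsup (\<lambda>k. ereal (x k)) \<le> limsup (\<lambda>k. ereal (y k) + ereal e)"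
    by (rule Limsup_mono) (use ev in \<open>auto elim: eventually_mono\<close>)
  also have "\<dots> \<le> limsup (\<lambda>k. ereal (y k)) + limsup (\<lambda>k. ereal e)"
    by (rule ereal_limsup_add_mono)
  also have "limsup (\<lambda>k::nat. ereal e) = ereal e" by (simp add: Limsup_const)
  finally show "limsup (\<lambda>k. ereal (x k)) \<le> limsup (\<lambda>k. ereal (y k)) + ereal e" .
qed

lemma limsup_diff_eq:
  fixes x y :: "nat \<Rightarrow> real"
  assumes lim: "(\<lambda>k. x k - y k) \<longlonglongrightarrow> 0"
  shows "limsup (\<lambda>k. ereal (x k)) = limsup (\<lambda>k. ereal (y k))"
proof (rule antisym)
  show "limsup (\<lambda>k. ereal (x k)) \<le> limsup (\<lambda>k. ereal (y k))" by (rule limsup_diff_le[OF lim])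
  have "(\<lambda>k. - (x k - y k)) \<longlonglongrightarrow> - 0" by (rule tendsto_minus[OF lim])
  then have "(\<lambda>k. y k - x k) \<longlonglongrightarrow> 0" by simp
  then show "limsup (\<lambda>k. ereal (y k)) \<le> limsup (\<lambda>k. ereal (x k))" by (rule limsup_diff_le)
qed

definition cl :: "real \<Rightarrow> real" where "cl x = max 0 (min 1 x)"

lemma cl_lip: "\<bar>cl x - cl y\<bar> \<le> \<bar>x - y\<bar>"
  unfolding cl_def by (simp add: abs_if max_def min_def)

lemma cl_scale:
  assumes d: "0 \<le> d" shows "\<bar>cl ((1 + d) * a) - cl a\<bar> \<le> d"
proof (cases "a \<le> 0")
  case True
  then have "(1 + d) * a \<le> 0" using d by (simp add: mult_nonneg_nonpos)
  then show ?thesis using True d by (simp add: cl_def)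
next
  case False
  then have a: "a > 0" by simp
  have ad: "0 \<le> a * d" using a d by simp
  show ?thesis
  proof (cases "a \<ge> 1")
    case True
    then have "(1 + d) * a \<ge> 1" using ad by (simp add: algebra_simps)
    then show ?thesis using True d by (simp add: cl_def)
  next
    case False
    have "a * d \<le> 1 * d" using False d by (intro mult_right_mono) auto
    then show ?thesis using False a ad d by (auto simp: cl_def algebra_simps abs_if min_def max_def)
  qed
qed

lemma cl_gt: "0 \<le> beta \<Longrightarrow> cl x > beta \<Longrightarrow> x > beta"
  unfolding cl_def by (auto simp: max_def min_def split: if_splits)

lemma cl_lt: "e \<le> 1 \<Longrightarrow> cl x < e \<Longrightarrow> x < e"
  unfolding cl_def by (auto simp: max_def min_def split: if_splits)

lemma cl_bounds: "0 \<le> cl x" "cl x \<le> 1"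
  unfolding cl_def by auto

context blk
begin

definition "Ak k \<omega> = Bk k \<omega> / real k"
definition "g \<omega> = limsup (\<lambda>k. ereal (cl (Ak k \<omega>)))"

lemma Bk_meas[measurable]: "Bk k \<in> borel_measurable M"
  by (rule borel_measurable_integrable[OF Bk_int])

lemma Ak_meas[measurable]: "Ak k \<in> borel_measurable M"
  unfolding Ak_def by measurable

lemma g_meas[measurable]: "g \<in> borel_measurable M"
  unfolding g_def cl_def by measurable

lemma Bk_Suc: "\<omega> \<in> space M \<Longrightarrow> Bk (Suc k) \<omega> = phi \<omega> + Bk k (T v \<omega>)"
proof -
  assume om: "\<omega> \<in> space M"
  have "Bk (Suc k) \<omega> = phi (T (of_nat 0 * v) \<omega>) + (\<Sum>i<k. phi (T (of_nat (Suc i) * v) \<omega>))"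
    unfolding Bk_def by (rule sum.lessThan_Suc_shift)
  also have "phi (T (of_nat 0 * v) \<omega>) = phi \<omega>" using om by (simp add: T0)
  also have "(\<Sum>i<k. phi (T (of_nat (Suc i) * v) \<omega>)) = Bk k (T v \<omega>)"
    unfolding Bk_def
  proof (intro sum.cong refl)
    fix i
    have "(of_nat (Suc i) :: int^'d) * v = of_nat i * v + v" by (simp add: distrib_right)
    then show "phi (T (of_nat (Suc i) * v) \<omega>) = phi (T (of_nat i * v) (T v \<omega>))"
      using Tadd[OF kv_G v_G om, of i] by simp
  qed
  finally show ?thesis .
qed

lemma core:
  assumes inv: "\<And>x. x \<in> G \<Longrightarrow> AE \<omega> in M. g (T x \<omega>) = g \<omega>"
  shows "AE \<omega> in M. \<forall>e>0. eventually (\<lambda>k. Ak k \<omega> < e) sequentially"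
proof -
  have allinv: "AE \<omega> in M. \<forall>x\<in>G. g (T x \<omega>) = g \<omega>"
    using inv countable_G by (simp add: AE_ball_countable)
  have zero: "AE \<omega> in M. g \<omega> \<le> ereal beta" if beta: "0 < beta" for beta :: real
  proof -
    define E where "E = {\<omega>\<in>space M. g \<omega> > ereal beta}"
    have Em: "E \<in> sets M" unfolding E_def by measurable
    define E' where "E' = (\<Inter>x\<in>G. T x -` E \<inter> space M)"
    have E'm: "E' \<in> sets M" unfolding E'_def
      using measurable_sets[OF Tmeas Em] countable_G gen_zero[of R]
      by (intro sets.countable_INT') auto
    have E'inv: "T z -` E' \<inter> space M = E'" if z: "z \<in> G" for z
    proof (intro set_eqI iffI)
      fix \<omega> assume "\<omega> \<in> T z -` E' \<inter> space M"
      then have om: "\<omega> \<in> space M" and tz: "T z \<omega> \<in> E'" by auto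
      have H: "T x (T z \<omega>) \<in> E" if "x \<in> G" for x
        using tz that unfolding E'_def by blast
      show "\<omega> \<in> E'" unfolding E'_def
      proof (intro INT_I IntI vimageI2 om)
        fix y assume y: "y \<in> G"
        have "T y \<omega> = T (y - z + z) \<omega>" by simp
        also have "\<dots> = T (y - z) (T z \<omega>)" by (rule Tadd[OF gen_group_diff[OF y z] z om])
        finally show "T y \<omega> \<in> E" using H[OF gen_group_diff[OF y z]] by simp
      qed
    next
      fix \<omega> assume "\<omega> \<in> E'"
      then have om: "\<omega> \<in> space M" using gen_zero[of R] unfolding E'_def by blast
      have H: "T x \<omega> \<in> E" if "x \<in> G" for x
        using \<open>\<omega> \<in> E'\<close> that unfolding E'_def by blast
      have "T z \<omega> \<in> E'" unfolding E'_def
      proof (intro INT_I IntI vimageI2 Tspace[OF z om])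
        fix x assume x: "x \<in> G"
        show "T x (T z \<omega>) \<in> E" using H[OF gen_add[OF x z]] Tadd[OF x z om] by simp
      qed
      then show "\<omega> \<in> T z -` E' \<inter> space M" using om by simp
    qed
    have "AE \<omega> in M. \<omega> \<in> E \<longleftrightarrow> \<omega> \<in> E'"
      using eventually_conj[OF AE_space allinv]
    proof (rule eventually_mono)
      fix \<omega> assume H: "\<omega> \<in> space M \<and> (\<forall>x\<in>G. g (T x \<omega>) = g \<omega>)"
      show "\<omega> \<in> E \<longleftrightarrow> \<omega> \<in> E'"
      proof
        assume "\<omega> \<in> E"
        then have "T x \<omega> \<in> E" if "x \<in> G" for x
          using H Tspace[OF that] that unfolding E_def by auto
        then show "\<omega> \<in> E'" unfolding E'_def using H Tspace by auto
      next
        assume "\<omega> \<in> E'"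
        then have "T 0 \<omega> \<in> E" unfolding E'_def using gen_zero[of R] by blast
        then show "\<omega> \<in> E" using T0 H by simp
      qed
    qed
    then have mEE': "measure M E = measure M E'" by (rule measure_eq_AE[OF _ Em E'm])
    have "measure M E \<noteq> 1"
    proof
      assume "measure M E = 1"
      then have aeE: "AE \<omega> in M. \<omega> \<in> E" using AE_prob_1 by blast
      have "AE \<omega> in M. \<exists>k. (\<Sum>i<k. (\<lambda>\<omega>. phi \<omega> - beta) (T (of_nat i * v) \<omega>)) > 0"
        using aeE
      proof (rule eventually_mono)
        fix \<omega> assume "\<omega> \<in> E"
        then have gb: "ereal beta < g \<omega>" by (simp add: E_def)
        have "\<not> (g \<omega> \<le> ereal beta)" using gb by simp
        then obtain y where y: "y > ereal beta" "\<not> eventually (\<lambda>k. y > ereal (cl (Ak k \<omega>))) sequentially"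
          unfolding g_def Limsup_le_iff by auto
        then have "frequently (\<lambda>k. y \<le> ereal (cl (Ak k \<omega>))) sequentially"
          by (simp add: not_eventually not_less)
        then obtain k where k: "y \<le> ereal (cl (Ak k \<omega>))" by (auto dest: frequently_ex)
        have "ereal beta < ereal (cl (Ak k \<omega>))" using y(1) k by (rule less_le_trans)
        then have "cl (Ak k \<omega>) > beta" by simp
        then have A: "Ak k \<omega> > beta" using cl_gt beta by (meson less_imp_le)
        have "k \<noteq> 0"
        proof
          assume "k = 0" then show False using A beta by (simp add: Ak_def)
        qed
        then have "Bk k \<omega> > beta * real k" using A by (simp add: Ak_def pos_less_divide_eq mult.commute)
        moreover have "(\<Sum>i<k. (\<lambda>\<omega>. phi \<omega> - beta) (T (of_nat i * v) \<omega>)) = Bk k \<omega> - beta * real k"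
          by (simp add: Bk_def sum_subtractf)
        ultimately show "\<exists>k. (\<Sum>i<k. (\<lambda>\<omega>. phi \<omega> - beta) (T (of_nat i * v) \<omega>)) > 0"
          by (intro exI[of _ k]) linarith
      qed
      then have "integral\<^sup>L M (\<lambda>\<omega>. phi \<omega> - beta) \<ge> 0"
        using phi_int by (intro maximal_ergodic[OF v_G]) auto
      moreover have "integral\<^sup>L M (\<lambda>\<omega>. phi \<omega> - beta) = - beta"
        using phi_int phi_mean prob_space by (simp add: Bochner_Integration.integral_diff)
      ultimately show False using beta by simp
    qed
    then have "measure M E' = 0" using erg[OF E'm E'inv] mEE' by auto
    then have "measure M E = 0" using mEE' by simp
    then have "E \<in> null_sets M" using Em by (simp add: emeasure_eq_measure null_sets_def)
    then have "AE \<omega> in M. \<omega> \<notin> E" by (rule AE_not_in)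
    then show ?thesis
      using AE_space by eventually_elim (auto simp: E_def not_less)
  qed
  have "AE \<omega> in M. \<forall>m. g \<omega> \<le> ereal (1 / real (Suc (Suc m)))"
    using zero by (simp add: AE_all_countable)
  then show ?thesis
  proof (rule eventually_mono)
    fix \<omega> assume H: "\<forall>m. g \<omega> \<le> ereal (1 / real (Suc (Suc m)))"
    show "\<forall>e>0. eventually (\<lambda>k. Ak k \<omega> < e) sequentially"
    proof (intro allI impI)
      fix e :: real assume e: "e > 0"
      obtain m where m: "1 / real (Suc m) < min e 1" using e by (metis nat_approx_posE min_less_iff_conj zero_less_one)
      have "1 / real (Suc (Suc m)) \<le> 1 / real (Suc m)" by (simp add: frac_le)
      then have "g \<omega> < ereal (min e 1)" using H m by (meson ereal_less_eq(3) le_less_trans less_ereal.simps(1) order_trans)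
      then have "eventually (\<lambda>k. ereal (cl (Ak k \<omega>)) < ereal (min e 1)) sequentially"
        unfolding g_def by (rule Limsup_lessD)
      then show "eventually (\<lambda>k. Ak k \<omega> < e) sequentially"
      proof (rule eventually_mono)
        fix k assume "ereal (cl (Ak k \<omega>)) < ereal (min e 1)"
        then have "cl (Ak k \<omega>) < min e 1" by simp
        then have "Ak k \<omega> < min e 1" by (rule cl_lt[rotated]) simp
        then show "Ak k \<omega> < e" by simp
      qed
    qed
  qed
qed

end

lemma real_inf: "filterlim (real :: nat \<Rightarrow> real) at_infinity sequentially"
  by (rule filterlim_at_top_imp_at_infinity[OF filterlim_real_sequentially])

lemma classK_neg: "classK M R T l F \<Longrightarrow> classK M R T l (\<lambda>e z. - F e z)"
  unfolding classK_def path_sum_neg by auto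

context blk
begin

lemma lb2: "l \<le> n + l * b" using lb by linarith

definition "Kmax = l * b + 2 * l + b + 1"
definition "Off = sum_list ` {w. set w \<subseteq> R \<and> length w \<le> Kmax}"
definition "Psi \<omega> = (\<Sum>y\<in>Off. Phi (T y \<omega>))"

lemma finOff: "finite Off"
  unfolding Off_def using finite_lists_length_le[OF finR] by simp

lemma Off_G: "y \<in> Off \<Longrightarrow> y \<in> G"
  unfolding Off_def using gen_group_sum_list by auto

lemma Psi_nonneg: "Psi \<omega> \<ge> 0"
  unfolding Psi_def by (intro sum_nonneg Phi_nonneg)

lemma Psi_int: "integrable M Psi"
  unfolding Psi_def by (intro Bochner_Integration.integrable_sum integrable_T[OF Off_G Phi_int])

lemma Phi_le_Psi: "y \<in> Off \<Longrightarrow> Phi (T y \<omega>) \<le> Psi \<omega>"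
  unfolding Psi_def using finOff Phi_nonneg by (intro member_le_sum) auto

lemma tail_bound:
  assumes w: "set w \<subseteq> R" "length w = l" and p: "set p \<subseteq> R" and len: "l + length p \<le> Kmax"
    and om: "\<omega> \<in> space M"
  shows "\<bar>path_sum T F (\<omega>, w) p\<bar> \<le> real (length p) * Psi \<omega>"
proof -
  have "\<bar>path_sum T F (\<omega>, w) p\<bar> \<le> (\<Sum>i<length p. Phi (T (sum_list (take i (w @ p))) \<omega>))"
    by (rule path_sum_bound[OF w p om])
  also have "\<dots> \<le> (\<Sum>i<length p. Psi \<omega>)"
  proof (intro sum_mono Phi_le_Psi)
    fix i assume "i \<in> {..<length p}"
    have "set (take i (w @ p)) \<subseteq> R"
      using w p set_take_subset[of i "w @ p"] by auto
    moreover have "length (take i (w @ p)) \<le> Kmax" using len w by simp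
    ultimately show "sum_list (take i (w @ p)) \<in> Off" unfolding Off_def by blast
  qed
  finally show ?thesis by simp
qed

lemma end_cpow:
  assumes q: "set q \<subseteq> R" and om: "\<omega> \<in> space M"
  shows "eta T (\<omega>, L) (q @ cpow c l) (length (q @ cpow c l)) = (T (sum_list q + of_nat l * v) \<omega>, L)"
proof -
  let ?Q = "q @ cpow c l"
  have sQ: "set ?Q \<subseteq> R" using q set_cpowR by auto
  have lQ: "length L \<le> length ?Q" using len_L lb2 by simp
  have dr: "drop (length ?Q - length L) ?Q = L" using last_app_cpow len_L by simp
  define m where "m = length ?Q - length L"
  have dr': "drop m ?Q = L" unfolding m_def by (rule dr)
  have e: "sum_list (take m ?Q) + sum_list (drop m ?Q) = sum_list ?Q" by (rule sum_take_drop)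
  then have "sum_list (take m ?Q) + sum_list L = sum_list q + of_nat l * v"
    unfolding dr' sum_list_append sum_cpowv .
  then have "sum_list L + sum_list (take (length ?Q - length L) ?Q) = sum_list q + of_nat l * v"
    unfolding m_def by (metis add.commute)
  then show ?thesis using eta_end_ge[OF set_L sQ om lQ] dr by simp
qed

lemma inv_diff:
  assumes z: "z \<in> R" and om: "\<omega> \<in> space M"
    and coc: "\<forall>zs a a'. set zs \<subseteq> R \<and> length zs = l \<and> set a \<subseteq> R \<and> set a' \<subseteq> R \<and>
        eta T (\<omega>, zs) a (length a) = eta T (\<omega>, zs) a' (length a') \<longrightarrow>
        path_sum T F (\<omega>, zs) a = path_sum T F (\<omega>, zs) a'"
  shows "Bk k (T (z + of_nat l * v) \<omega>) = Bk k \<omega> + path_sum T F (T (of_nat k * v) \<omega>, L) ([z] @ cpow c l)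
           - path_sum T F (\<omega>, L) ([z] @ cpow c l)"
proof -
  let ?P = "[z] @ cpow c l"
  let ?Q1 = "(cpow c k @ [z]) @ cpow c l"
  let ?Q2 = "([z] @ cpow c k) @ cpow c l"
  have sP: "set ?P \<subseteq> R" using z set_cpowR by auto
  have s1: "set (cpow c k @ [z]) \<subseteq> R" using z set_cpowR by auto
  have s2: "set ([z] @ cpow c k) \<subseteq> R" using z set_cpowR by auto
  have Q1: "set ?Q1 \<subseteq> R" using s1 set_cpowR by auto
  have Q2: "set ?Q2 \<subseteq> R" using s2 set_cpowR by auto
  have "eta T (\<omega>, L) ?Q1 (length ?Q1) = eta T (\<omega>, L) ?Q2 (length ?Q2)"
    unfolding end_cpow[OF s1 om] end_cpow[OF s2 om] by (simp add: add.commute)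
  then have eq: "path_sum T F (\<omega>, L) ?Q1 = path_sum T F (\<omega>, L) ?Q2"
    using coc set_L len_L Q1 Q2 by blast
  have zG: "z + of_nat l * v \<in> G" using gen_add[OF gen_base[OF z] kv_G] .
  have "path_sum T F (\<omega>, L) ?Q1 = path_sum T F (\<omega>, L) (cpow c k @ ?P)" by simp
  also have "\<dots> = Bk k \<omega> + path_sum T F (T (of_nat k * v) \<omega>, L) ?P"
    unfolding path_sum_append using PS_cpow[OF om] eta_cpow[OF om] by simp
  finally have e1: "path_sum T F (\<omega>, L) ?Q1 = Bk k \<omega> + path_sum T F (T (of_nat k * v) \<omega>, L) ?P" .
  have "?Q2 = ?P @ cpow c k" using cpow_add[of c k l] cpow_add[of c l k] by (simp add: add.commute)
  then have "path_sum T F (\<omega>, L) ?Q2 = path_sum T F (\<omega>, L) (?P @ cpow c k)" by simp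
  also have "\<dots> = path_sum T F (\<omega>, L) ?P + Bk k (T (z + of_nat l * v) \<omega>)"
    unfolding path_sum_append using end_cpow[of "[z]", OF _ om] z PS_cpow[OF Tspace[OF zG om]] by simp
  finally show ?thesis using e1 eq by simp
qed

lemma Ak_shift: "\<omega> \<in> space M \<Longrightarrow> k \<ge> 1 \<Longrightarrow>
    Ak k (T v \<omega>) = (1 + 1 / real k) * Ak (Suc k) \<omega> - phi \<omega> / real k"
proof -
  assume om: "\<omega> \<in> space M" and k: "k \<ge> 1"
  have "Ak k (T v \<omega>) = (Bk (Suc k) \<omega> - phi \<omega>) / real k"
    unfolding Ak_def using Bk_Suc[OF om] by simp
  also have "\<dots> = (1 + 1 / real k) * Ak (Suc k) \<omega> - phi \<omega> / real k"
  proof -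
    have r: "1 + 1 / real k = real (Suc k) / real k" using k by (simp add: field_simps)
    have nz: "real (Suc k) \<noteq> 0" "real k \<noteq> 0" using k by auto
    have "real (Suc k) / real k * (Bk (Suc k) \<omega> / real (Suc k)) = Bk (Suc k) \<omega> / real k"
      using nz by (simp add: field_simps del: of_nat_Suc)
    then show ?thesis unfolding Ak_def r by (simp add: diff_divide_distrib)
  qed
  finally show ?thesis .
qed

lemma g_inv_v: "\<omega> \<in> space M \<Longrightarrow> g (T v \<omega>) = g \<omega>"
proof -
  assume om: "\<omega> \<in> space M"
  have bound: "\<bar>cl (Ak k (T v \<omega>)) - cl (Ak (Suc k) \<omega>)\<bar> \<le> (\<bar>phi \<omega>\<bar> + 1) / real k" if k: "k \<ge> 1" for k
  proof -
    let ?a = "Ak (Suc k) \<omega>" and ?d = "1 / real k"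
    have "\<bar>cl (Ak k (T v \<omega>)) - cl ((1 + ?d) * ?a)\<bar> \<le> \<bar>Ak k (T v \<omega>) - (1 + ?d) * ?a\<bar>" by (rule cl_lip)
    also have "\<dots> = \<bar>phi \<omega>\<bar> / real k" unfolding Ak_shift[OF om k] by simp
    finally have 1: "\<bar>cl (Ak k (T v \<omega>)) - cl ((1 + ?d) * ?a)\<bar> \<le> \<bar>phi \<omega>\<bar> / real k" .
    have 2: "\<bar>cl ((1 + ?d) * ?a) - cl ?a\<bar> \<le> ?d" by (rule cl_scale) simp
    have "\<bar>cl (Ak k (T v \<omega>)) - cl ?a\<bar> \<le> \<bar>phi \<omega>\<bar> / real k + ?d" using 1 2 by linarith
    also have "\<dots> = (\<bar>phi \<omega>\<bar> + 1) / real k" by (simp add: add_divide_distrib)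
    finally show ?thesis .
  qed
  have lim0: "(\<lambda>k. (\<bar>phi \<omega>\<bar> + 1) / real k) \<longlonglongrightarrow> 0"
    by (rule tendsto_divide_0[OF tendsto_const real_inf])
  have "(\<lambda>k. cl (Ak k (T v \<omega>)) - cl (Ak (Suc k) \<omega>)) \<longlonglongrightarrow> 0"
  proof (rule Lim_null_comparison[OF _ lim0])
    show "eventually (\<lambda>k. norm (cl (Ak k (T v \<omega>)) - cl (Ak (Suc k) \<omega>)) \<le> (\<bar>phi \<omega>\<bar> + 1) / real k) sequentially"
      using eventually_ge_at_top[of 1] by (rule eventually_mono) (simp add: bound)
  qed
  then have "g (T v \<omega>) = limsup (\<lambda>k. ereal (cl (Ak (Suc k) \<omega>)))"
    unfolding g_def by (rule limsup_diff_eq)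
  also have "\<dots> = g \<omega>" unfolding g_def using limsup_shift[of "\<lambda>k. ereal (cl (Ak k \<omega>))"] by simp
  finally show ?thesis .
qed

lemma g_inv_gen: "z \<in> R \<Longrightarrow> AE \<omega> in M. g (T (z + of_nat l * v) \<omega>) = g \<omega>"
proof -
  assume z: "z \<in> R"
  have zG: "z + of_nat l * v \<in> G" using gen_add[OF gen_base[OF z] kv_G] .
  have BCa: "AE \<omega> in M. (\<lambda>k. Psi (T (of_nat k * v) \<omega>) / real k) \<longlonglongrightarrow> 0"
    by (rule BC[OF v_G Psi_int Psi_nonneg])
  show ?thesis
    using eventually_conj[OF AE_space eventually_conj[OF K_coc BCa]]
  proof (rule eventually_mono)
    fix \<omega> assume H: "\<omega> \<in> space M \<and> (\<forall>zs a a'. set zs \<subseteq> R \<and> length zs = l \<and> set a \<subseteq> R \<and> set a' \<subseteq> R \<and>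
        eta T (\<omega>, zs) a (length a) = eta T (\<omega>, zs) a' (length a') \<longrightarrow>
        path_sum T F (\<omega>, zs) a = path_sum T F (\<omega>, zs) a') \<and>
        (\<lambda>k. Psi (T (of_nat k * v) \<omega>) / real k) \<longlonglongrightarrow> 0"
    then have om: "\<omega> \<in> space M" by simp
    let ?P = "[z] @ cpow c l"
    define C where "C = \<bar>path_sum T F (\<omega>, L) ?P\<bar>"
    define n where "n = real (length ?P)"
    have sP: "set ?P \<subseteq> R" using z set_cpowR by auto
    have lP: "l + length ?P \<le> Kmax" unfolding Kmax_def by simp
    have bnd: "\<bar>Ak k (T (z + of_nat l * v) \<omega>) - Ak k \<omega>\<bar> \<le> C / real k + n * (Psi (T (of_nat k * v) \<omega>) / real k)" for k
    proof -
      have "\<bar>Bk k (T (z + of_nat l * v) \<omega>) - Bk k \<omega>\<bar> \<le> \<bar>path_sum T F (T (of_nat k * v) \<omega>, L) ?P\<bar> + C"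
        unfolding inv_diff[OF z om H[THEN conjunct2, THEN conjunct1]] C_def by linarith
      also have "\<bar>path_sum T F (T (of_nat k * v) \<omega>, L) ?P\<bar> \<le> n * Psi (T (of_nat k * v) \<omega>)"
        unfolding n_def by (rule tail_bound[OF set_L len_L sP lP Tspace[OF kv_G om]])
      finally have "\<bar>Bk k (T (z + of_nat l * v) \<omega>) - Bk k \<omega>\<bar> \<le> n * Psi (T (of_nat k * v) \<omega>) + C" by simp
      then have "\<bar>Bk k (T (z + of_nat l * v) \<omega>) - Bk k \<omega>\<bar> / real k \<le> (n * Psi (T (of_nat k * v) \<omega>) + C) / real k"
        by (simp add: divide_right_mono)
      then show ?thesis unfolding Ak_def by (simp add: diff_divide_distrib[symmetric] add_divide_distrib)
    qed
    have lim: "(\<lambda>k. C / real k + n * (Psi (T (of_nat k * v) \<omega>) / real k)) \<longlonglongrightarrow> 0 + n * 0"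
      using H by (intro tendsto_add tendsto_mult tendsto_const tendsto_divide_0[OF tendsto_const real_inf]) auto
    have "(\<lambda>k. cl (Ak k (T (z + of_nat l * v) \<omega>)) - cl (Ak k \<omega>)) \<longlonglongrightarrow> 0"
    proof (rule Lim_null_comparison)
      show "eventually (\<lambda>k. norm (cl (Ak k (T (z + of_nat l * v) \<omega>)) - cl (Ak k \<omega>)) \<le> C / real k + n * (Psi (T (of_nat k * v) \<omega>) / real k)) sequentially"
      proof (intro always_eventually allI)
        fix k
        show "norm (cl (Ak k (T (z + of_nat l * v) \<omega>)) - cl (Ak k \<omega>)) \<le> C / real k + n * (Psi (T (of_nat k * v) \<omega>) / real k)"
          unfolding real_norm_def by (rule order_trans[OF cl_lip bnd])
      qed
      show "(\<lambda>k. C / real k + n * (Psi (T (of_nat k * v) \<omega>) / real k)) \<longlonglongrightarrow> 0" using lim by simp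
    qed
    then show "g (T (z + of_nat l * v) \<omega>) = g \<omega>" unfolding g_def by (rule limsup_diff_eq)
  qed
qed

definition "Inv = {x\<in>G. AE \<omega> in M. g (T x \<omega>) = g \<omega>}"

lemma Inv_add: "x \<in> Inv \<Longrightarrow> y \<in> Inv \<Longrightarrow> x + y \<in> Inv"
proof -
  assume x: "x \<in> Inv" and y: "y \<in> Inv"
  then have xG: "x \<in> G" and yG: "y \<in> G" by (auto simp: Inv_def)
  have a1: "AE \<omega> in M. g (T x (T y \<omega>)) = g (T y \<omega>)" using AE_T[OF yG, of "\<lambda>\<omega>. g (T x \<omega>) = g \<omega>"] x by (simp add: Inv_def)
  have a2: "AE \<omega> in M. g (T y \<omega>) = g \<omega>" using y by (simp add: Inv_def)
  have "AE \<omega> in M. g (T (x + y) \<omega>) = g \<omega>"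
    using eventually_conj[OF AE_space eventually_conj[OF a1 a2]]
    by (rule eventually_mono) (simp add: Tadd[OF xG yG])
  then show ?thesis using gen_add[OF xG yG] by (simp add: Inv_def)
qed

lemma Inv_neg: "x \<in> Inv \<Longrightarrow> - x \<in> Inv"
proof -
  assume x: "x \<in> Inv"
  then have xG: "x \<in> G" by (auto simp: Inv_def)
  have nG: "- x \<in> G" using gen_neg[OF xG] .
  have a1: "AE \<omega> in M. g (T x (T (- x) \<omega>)) = g (T (- x) \<omega>)" using AE_T[OF nG, of "\<lambda>\<omega>. g (T x \<omega>) = g \<omega>"] x by (simp add: Inv_def)
  have "AE \<omega> in M. g (T (- x) \<omega>) = g \<omega>"
    using eventually_conj[OF AE_space a1]
  proof (rule eventually_mono)
    fix \<omega> assume H: "\<omega> \<in> space M \<and> g (T x (T (- x) \<omega>)) = g (T (- x) \<omega>)"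
    have "T x (T (- x) \<omega>) = T (x + - x) \<omega>" using Tadd[OF xG nG] H by simp
    also have "\<dots> = \<omega>" using T0 H by simp
    finally show "g (T (- x) \<omega>) = g \<omega>" using H by simp
  qed
  then show ?thesis using nG by (simp add: Inv_def)
qed

lemma Inv_v: "v \<in> Inv"
  unfolding Inv_def using v_G g_inv_v by (auto intro: AE_I2)

lemma Inv_0: "0 \<in> Inv"
  unfolding Inv_def using gen_zero[of R] T0 by (auto intro: AE_I2)

lemma Inv_kv: "(of_nat k :: int^'d) * v \<in> Inv"
proof (induction k)
  case 0 then show ?case using Inv_0 by simp
next
  case (Suc k)
  have "(of_nat (Suc k) :: int^'d) * v = v + of_nat k * v" by (simp add: distrib_right)
  then show ?case using Inv_add[OF Inv_v Suc] by simp
qed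

lemma Inv_R: "z \<in> R \<Longrightarrow> z \<in> Inv"
proof -
  assume z: "z \<in> R"
  have a: "z + of_nat l * v \<in> Inv"
    using g_inv_gen[OF z] gen_add[OF gen_base[OF z] kv_G] by (simp add: Inv_def)
  have "z = (z + of_nat l * v) + - (of_nat l * v)" by simp
  then show ?thesis using Inv_add[OF a Inv_neg[OF Inv_kv]] by metis
qed

lemma Inv_all: "x \<in> G \<Longrightarrow> x \<in> Inv"
proof (induction rule: gen_group.induct)
  case gen_zero then show ?case by (rule Inv_0)
next
  case (gen_base z) then show ?case by (rule Inv_R)
next
  case (gen_add x y) then show ?case using Inv_add by blast
next
  case (gen_neg x) then show ?case using Inv_neg by blast
qed

lemma Ak_upper: "AE \<omega> in M. \<forall>e>0. eventually (\<lambda>k. Ak k \<omega> < e) sequentially"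
  by (rule core) (use Inv_all in \<open>auto simp: Inv_def\<close>)

end

lemma (in blk) Ak_tendsto: "AE \<omega> in M. (\<lambda>k. Ak k \<omega>) \<longlonglongrightarrow> 0"
proof -
  interpret neg: blk M R T l "\<lambda>e z. - F e z" b c
    using classK_neg[OF K] b_pos set_c len_c by unfold_locales auto
  have "neg.phi = (\<lambda>\<omega>. - phi \<omega>)"
    unfolding neg.phi_def phi_def neg.L_def L_def path_sum_neg by simp
  then have "neg.Ak k \<omega> = - Ak k \<omega>" for k \<omega>
    unfolding neg.Ak_def Ak_def neg.Bk_def Bk_def neg.v_def v_def by (simp add: sum_negf)
  then have up2: "AE \<omega> in M. \<forall>e>0. eventually (\<lambda>k. - Ak k \<omega> < e) sequentially"
    using neg.Ak_upper by simp
  show ?thesis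
    using eventually_conj[OF Ak_upper up2]
  proof (rule eventually_mono)
    fix \<omega> assume H: "(\<forall>e>0. eventually (\<lambda>k. Ak k \<omega> < e) sequentially) \<and> (\<forall>e>0. eventually (\<lambda>k. - Ak k \<omega> < e) sequentially)"
    show "(\<lambda>k. Ak k \<omega>) \<longlonglongrightarrow> 0"
    proof (rule order_tendstoI)
      fix a :: real assume "a < 0"
      then have "eventually (\<lambda>k. - Ak k \<omega> < - a) sequentially"
        using H[THEN conjunct2, rule_format, of "- a"] by simp
      then show "eventually (\<lambda>k. a < Ak k \<omega>) sequentially" by (rule eventually_mono) simp
    next
      fix a :: real assume "0 < a"
      then show "eventually (\<lambda>k. Ak k \<omega> < a) sequentially"
        using H[THEN conjunct1, rule_format, of a] by simp
    qed
  qed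
qed


locale fin = blk M R T l F b c for M :: "'a measure" and R :: "(int ^ 'd) set" and T l F b c +
  fixes xhat :: "nat \<Rightarrow> int ^ 'd" and zs zbar :: "(int ^ 'd) list"
  assumes xstep: "\<And>n. xhat (Suc n) - xhat n \<in> R"
    and xb: "\<And>j. xhat (j * b) = of_nat j * v"
    and zs: "set zs \<subseteq> R" "length zs = l"
    and zbar: "set zbar \<subseteq> R" "length zbar = l"
begin

definition "A n = An R l xhat n zs zbar"
definition "st n = xhat (Suc n) - xhat n"

lemma A_props:
  assumes "a \<in> A n"
  shows "length a = n" "set a \<subseteq> R" "sum_list zs + sum_list (take (n - l) a) = xhat n"
    "drop (n - l) a = zbar" "l \<le> n"
proof -
  show 1: "length a = n" and "set a \<subseteq> R" and "sum_list zs + sum_list (take (n - l) a) = xhat n"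
    and 2: "drop (n - l) a = zbar"
    using assms unfolding A_def An_def by auto
  have "length (drop (n - l) a) = l" using 2 zbar by simp
  then show "l \<le> n" using 1 by simp
qed

lemma end_A: "a \<in> A n \<Longrightarrow> \<omega> \<in> space M \<Longrightarrow> eta T (\<omega>, zs) a (length a) = (T (xhat n) \<omega>, zbar)"
  using eta_end_ge[OF zs(1), of a \<omega>] A_props[of a n] zs(2) by simp

lemma st_R: "set (map st [p..<q]) \<subseteq> R"
  using xstep by (auto simp: st_def)

lemma st_sum: "p \<le> q \<Longrightarrow> sum_list (map st [p..<q]) = xhat q - xhat p"
proof (induction q rule: dec_induct)
  case base then show ?case by simp
next
  case (step q) then show ?case by (simp add: st_def)
qed

definition "coc \<omega> \<longleftrightarrow> (\<forall>zs a a'. set zs \<subseteq> R \<and> length zs = l \<and> set a \<subseteq> R \<and> set a' \<subseteq> R \<and>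
        eta T (\<omega>, zs) a (length a) = eta T (\<omega>, zs) a' (length a') \<longrightarrow>
        path_sum T F (\<omega>, zs) a = path_sum T F (\<omega>, zs) a')"

lemma AE_coc: "AE \<omega> in M. coc \<omega>"
  using K_coc unfolding coc_def .

lemma coc_use: "coc \<omega> \<Longrightarrow> set a \<subseteq> R \<Longrightarrow> set a' \<subseteq> R \<Longrightarrow>
    eta T (\<omega>, zs) a (length a) = eta T (\<omega>, zs) a' (length a') \<Longrightarrow>
    path_sum T F (\<omega>, zs) a = path_sum T F (\<omega>, zs) a'"
  unfolding coc_def using zs by blast

definition "an n = (SOME a. a \<in> A n)"
definition "h n \<omega> = (if A n = {} then 0 else \<bar>path_sum T F (\<omega>, zs) (an n)\<bar> / real n)"

lemma an_in: "A n \<noteq> {} \<Longrightarrow> an n \<in> A n"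
  unfolding an_def by (rule someI_ex) auto

lemma h_nonneg: "h n \<omega> \<ge> 0" by (simp add: h_def)

lemma PS_A: "coc \<omega> \<Longrightarrow> \<omega> \<in> space M \<Longrightarrow> a \<in> A n \<Longrightarrow> path_sum T F (\<omega>, zs) a = path_sum T F (\<omega>, zs) (an n)"
proof -
  assume c: "coc \<omega>" and om: "\<omega> \<in> space M" and a: "a \<in> A n"
  have a': "an n \<in> A n" using an_in a by auto
  show ?thesis
    by (rule coc_use[OF c A_props(2)[OF a] A_props(2)[OF a']]) (simp add: end_A[OF a om] end_A[OF a' om])
qed

lemma max_avg_h: "coc \<omega> \<Longrightarrow> \<omega> \<in> space M \<Longrightarrow> max_avg R l T F xhat zs zbar n \<omega> = h n \<omega>"
proof (cases "A n = {}")
  case True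
  then show ?thesis by (simp add: max_avg_def h_def A_def[symmetric])
next
  case False
  assume c: "coc \<omega>" and om: "\<omega> \<in> space M"
  have "(\<lambda>a. \<bar>path_sum T F (\<omega>, zs) a / real n\<bar>) ` A n = {h n \<omega>}"
    using False PS_A[OF c om] by (auto simp: h_def)
  then show ?thesis unfolding max_avg_def A_def[symmetric] using h_nonneg[of n \<omega>] by simp
qed

lemma h_ae: "AE \<omega> in M. (\<lambda>n. h n \<omega>) \<longlonglongrightarrow> 0"
proof (cases "\<exists>n0. A n0 \<noteq> {}")
  case False
  then show ?thesis by (intro AE_I2) (simp add: h_def)
next
  case True
  then obtain n0 a0 where a0: "a0 \<in> A n0" by blast
  note a0p = A_props[OF a0]
  define u0 where "u0 = map st [n0..<n0 * b]"
  define a0' where "a0' = take (n0 - l) a0 @ u0"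
  define pre where "pre = a0' @ cpow c l"
  have n0b: "n0 \<le> n0 * b" using b_pos by simp
  have s_a0': "set a0' \<subseteq> R"
    unfolding a0'_def u0_def using a0p(2) set_take_subset[of "n0 - l" a0] st_R by auto
  have sum_a0': "sum_list zs + sum_list a0' = of_nat n0 * v"
  proof -
    have "sum_list zs + sum_list a0' = (sum_list zs + sum_list (take (n0 - l) a0)) + sum_list u0"
      unfolding a0'_def by (simp add: add.assoc)
    also have "\<dots> = xhat n0 + (xhat (n0 * b) - xhat n0)"
      unfolding u0_def using a0p(3) st_sum[OF n0b] by simp
    also have "\<dots> = of_nat n0 * v" using xb[of n0] by simp
    finally show ?thesis .
  qed
  have s_pre: "set pre \<subseteq> R" unfolding pre_def using s_a0' set_cpowR by auto
  have sum_pre: "sum_list zs + sum_list pre = of_nat (n0 + l) * v"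
    unfolding pre_def using sum_a0' by (simp add: sum_cpowv add.assoc[symmetric] distrib_right)
  define y0 where "y0 = sum_list zs + sum_list (take (length pre - l) pre)"
  have y0G: "y0 \<in> G"
  proof -
    have "set (zs @ take (length pre - l) pre) \<subseteq> R"
      using zs(1) s_pre set_take_subset[of "length pre - l" pre] by auto
    then have "sum_list (zs @ take (length pre - l) pre) \<in> G" by (rule gen_group_sum_list)
    then show ?thesis unfolding y0_def by simp
  qed
  have lpre: "l \<le> length pre" unfolding pre_def using lb2 by simp
  have end_pre: "eta T (\<omega>, zs) pre (length pre) = (T y0 \<omega>, L)" if om: "\<omega> \<in> space M" for \<omega>
  proof -
    have "drop (length pre - l) pre = L" unfolding pre_def by (rule last_app_cpow)
    then show ?thesis using eta_end_ge[OF zs(1) s_pre om] zs(2) lpre by (simp add: y0_def)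
  qed
  define jj where "jj n = n div b - n0 - l" for n
  define u where "u n = map st [(n div b) * b..<n]" for n
  define X where "X n = pre @ (cpow c (jj n) @ u n)" for n
  define P2 where "P2 n = X n @ zbar" for n
  define N1 where "N1 = (n0 + l + 1) * b"
  have divN1: "n0 + l + 1 \<le> n div b" if "N1 \<le> n" for n
  proof -
    have "N1 div b \<le> n div b" using that by (rule div_le_mono)
    then show ?thesis unfolding N1_def using b_pos by simp
  qed
  have jj1: "1 \<le> jj n" if "N1 \<le> n" for n using divN1[OF that] by (simp add: jj_def)
  have jjn: "jj n \<le> n" for n unfolding jj_def by (meson diff_le_self div_le_dividend le_trans)
  have s_u: "set (u n) \<subseteq> R" for n unfolding u_def by (rule st_R)
  have len_u: "length (u n) < b" for n
  proof -
    have "length (u n) = n - n div b * b" by (simp add: u_def)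
    also have "\<dots> = n mod b" by (simp add: minus_div_mult_eq_mod)
    also have "\<dots> < b" using b_pos by simp
    finally show ?thesis .
  qed
  have s_X: "set (X n) \<subseteq> R" for n unfolding X_def using s_pre set_cpowR s_u by auto
  have s_P2: "set (P2 n) \<subseteq> R" for n unfolding P2_def using s_X zbar(1) by auto
  have sum_X: "sum_list zs + sum_list (X n) = xhat n" if n: "N1 \<le> n" for n
  proof -
    have jb: "n div b * b \<le> n" by simp
    have jsum: "n0 + l + jj n = n div b" using divN1[OF n] by (simp add: jj_def)
    have "sum_list zs + sum_list (X n) = (sum_list zs + sum_list pre) + of_nat (jj n) * v + sum_list (u n)"
      unfolding X_def by (simp add: sum_cpowv add.assoc)
    also have "\<dots> = of_nat (n0 + l) * v + of_nat (jj n) * v + (xhat n - xhat (n div b * b))"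
      unfolding sum_pre u_def st_sum[OF jb] ..
    also have "\<dots> = of_nat (n div b) * v + (xhat n - of_nat (n div b) * v)"
      unfolding xb jsum[symmetric] by (simp add: distrib_right)
    also have "\<dots> = xhat n" by simp
    finally show ?thesis .
  qed
  have end_P2: "eta T (\<omega>, zs) (P2 n) (length (P2 n)) = (T (xhat n) \<omega>, zbar)"
    if n: "N1 \<le> n" and om: "\<omega> \<in> space M" for n \<omega>
  proof -
    have l2: "length zs \<le> length (P2 n)" using zs(2) zbar(2) by (simp add: P2_def)
    have d: "drop (length (P2 n) - length zs) (P2 n) = zbar" using zs(2) zbar(2) by (simp add: P2_def)
    have t: "take (length (P2 n) - length zs) (P2 n) = X n" using zs(2) zbar(2) by (simp add: P2_def)
    show ?thesis using eta_end_ge[OF zs(1) s_P2 om l2] unfolding d t sum_X[OF n] .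
  qed
  have PS_P2: "path_sum T F (\<omega>, zs) (P2 n) = path_sum T F (\<omega>, zs) pre + Bk (jj n) (T y0 \<omega>)
      + path_sum T F (T (of_nat (jj n) * v) (T y0 \<omega>), L) (u n @ zbar)"
    if om: "\<omega> \<in> space M" for n \<omega>
  proof -
    have om': "T y0 \<omega> \<in> space M" by (rule Tspace[OF y0G om])
    have "path_sum T F (\<omega>, zs) (P2 n) = path_sum T F (\<omega>, zs) (pre @ (cpow c (jj n) @ (u n @ zbar)))"
      by (simp add: P2_def X_def)
    also have "\<dots> = path_sum T F (\<omega>, zs) pre + path_sum T F (T y0 \<omega>, L) (cpow c (jj n) @ (u n @ zbar))"
      using path_sum_append[of T F "(\<omega>, zs)" pre "cpow c (jj n) @ (u n @ zbar)"] end_pre[OF om] by simp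
    also have "path_sum T F (T y0 \<omega>, L) (cpow c (jj n) @ (u n @ zbar)) =
        Bk (jj n) (T y0 \<omega>) + path_sum T F (T (of_nat (jj n) * v) (T y0 \<omega>), L) (u n @ zbar)"
      using path_sum_append[of T F "(T y0 \<omega>, L)" "cpow c (jj n)" "u n @ zbar"] PS_cpow[OF om'] eta_cpow[OF om']
      by simp
    finally show ?thesis by (simp add: add.assoc)
  qed
  have F1: "AE \<omega> in M. (\<lambda>k. Ak k (T y0 \<omega>)) \<longlonglongrightarrow> 0"
    using AE_T[OF y0G Ak_tendsto] .
  have F2: "AE \<omega> in M. (\<lambda>k. Psi (T (of_nat k * v) (T y0 \<omega>)) / real k) \<longlonglongrightarrow> 0"
    using AE_T[OF y0G BC[OF v_G Psi_int Psi_nonneg]] .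
  show ?thesis
    using eventually_conj[OF AE_space eventually_conj[OF AE_coc eventually_conj[OF F1 F2]]]
  proof (rule eventually_mono)
    fix \<omega> assume H: "\<omega> \<in> space M \<and> coc \<omega> \<and> (\<lambda>k. Ak k (T y0 \<omega>)) \<longlonglongrightarrow> 0 \<and>
        (\<lambda>k. Psi (T (of_nat k * v) (T y0 \<omega>)) / real k) \<longlonglongrightarrow> 0"
    then have om: "\<omega> \<in> space M" and c: "coc \<omega>" by auto
    have om': "T y0 \<omega> \<in> space M" by (rule Tspace[OF y0G om])
    define C0 where "C0 = \<bar>path_sum T F (\<omega>, zs) pre\<bar>"
    define e where "e k = \<bar>Ak k (T y0 \<omega>)\<bar> + real (b + l) * (Psi (T (of_nat k * v) (T y0 \<omega>)) / real k)" for k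
    have e0: "e \<longlonglongrightarrow> 0"
    proof -
      have "(\<lambda>k. \<bar>Ak k (T y0 \<omega>)\<bar> + real (b + l) * (Psi (T (of_nat k * v) (T y0 \<omega>)) / real k)) \<longlonglongrightarrow> \<bar>0\<bar> + real (b + l) * 0"
        using H by (intro tendsto_add tendsto_mult tendsto_const tendsto_rabs) auto
      then show ?thesis unfolding e_def by simp
    qed
    have jjlim: "filterlim jj at_top sequentially"
    proof (subst filterlim_at_top, intro allI)
      fix Z
      show "eventually (\<lambda>n. Z \<le> jj n) sequentially"
        using eventually_ge_at_top[of "(Z + n0 + l) * b"]
      proof (rule eventually_mono)
        fix n assume "(Z + n0 + l) * b \<le> n"
        then have "(Z + n0 + l) * b div b \<le> n div b" by (rule div_le_mono)
        then show "Z \<le> jj n" using b_pos by (simp add: jj_def)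
      qed
    qed
    have ejj: "(\<lambda>n. e (jj n)) \<longlonglongrightarrow> 0" using filterlim_compose[OF e0 jjlim] .
    have c0: "(\<lambda>n. C0 / real n) \<longlonglongrightarrow> 0"
      by (rule tendsto_divide_0[OF tendsto_const real_inf])
    have upper: "h n \<omega> \<le> C0 / real n + e (jj n)" if n: "N1 \<le> n" for n
    proof (cases "A n = {}")
      case True
      have "0 \<le> e (jj n)" unfolding e_def using Psi_nonneg by (intro add_nonneg_nonneg mult_nonneg_nonneg divide_nonneg_nonneg) auto
      moreover have "0 \<le> C0 / real n" unfolding C0_def by simp
      ultimately show ?thesis using True by (simp add: h_def)
    next
      case False
      let ?a = "an n"
      have a: "?a \<in> A n" using an_in[OF False] .
      let ?j = "jj n"
      have j1: "1 \<le> ?j" by (rule jj1[OF n])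
      have n1: "1 \<le> n" using j1 jjn[of n] by linarith
      have "path_sum T F (\<omega>, zs) ?a = path_sum T F (\<omega>, zs) (P2 n)"
        by (rule coc_use[OF c A_props(2)[OF a] s_P2]) (simp add: end_A[OF a om] end_P2[OF n om])
      also have "\<dots> = path_sum T F (\<omega>, zs) pre + Bk ?j (T y0 \<omega>)
        + path_sum T F (T (of_nat ?j * v) (T y0 \<omega>), L) (u n @ zbar)" by (rule PS_P2[OF om])
      finally have eqa: "path_sum T F (\<omega>, zs) ?a = \<dots>" .
      have sUZ: "set (u n @ zbar) \<subseteq> R" using s_u zbar(1) by auto
      have lUZ: "l + length (u n @ zbar) \<le> Kmax" using len_u[of n] zbar(2) by (simp add: Kmax_def)
      have tb: "\<bar>path_sum T F (T (of_nat ?j * v) (T y0 \<omega>), L) (u n @ zbar)\<bar>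
          \<le> real (length (u n @ zbar)) * Psi (T (of_nat ?j * v) (T y0 \<omega>))"
        by (rule tail_bound[OF set_L len_L sUZ lUZ Tspace[OF kv_G om']])
      have "real (length (u n @ zbar)) \<le> real (b + l)" using len_u[of n] zbar(2) by simp
      then have tb2: "\<bar>path_sum T F (T (of_nat ?j * v) (T y0 \<omega>), L) (u n @ zbar)\<bar>
          \<le> real (b + l) * Psi (T (of_nat ?j * v) (T y0 \<omega>))"
        using tb Psi_nonneg by (meson mult_right_mono order_trans)
      have tot: "\<bar>path_sum T F (\<omega>, zs) ?a\<bar> \<le> C0 + \<bar>Bk ?j (T y0 \<omega>)\<bar> + real (b + l) * Psi (T (of_nat ?j * v) (T y0 \<omega>))"
        unfolding eqa C0_def using tb2 by linarith
      have hn: "h n \<omega> = \<bar>path_sum T F (\<omega>, zs) ?a\<bar> / real n" using False by (simp add: h_def)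
      have "h n \<omega> \<le> (C0 + \<bar>Bk ?j (T y0 \<omega>)\<bar> + real (b + l) * Psi (T (of_nat ?j * v) (T y0 \<omega>))) / real n"
        unfolding hn using tot n1 by (simp add: divide_right_mono)
      also have "\<dots> = C0 / real n + (\<bar>Bk ?j (T y0 \<omega>)\<bar> + real (b + l) * Psi (T (of_nat ?j * v) (T y0 \<omega>))) / real n"
        by (simp add: add_divide_distrib)
      also have "(\<bar>Bk ?j (T y0 \<omega>)\<bar> + real (b + l) * Psi (T (of_nat ?j * v) (T y0 \<omega>))) / real n
          \<le> (\<bar>Bk ?j (T y0 \<omega>)\<bar> + real (b + l) * Psi (T (of_nat ?j * v) (T y0 \<omega>))) / real ?j"
        using j1 jjn[of n] Psi_nonneg by (intro divide_left_mono add_nonneg_nonneg mult_nonneg_nonneg) auto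
      also have "\<dots> = e ?j"
        unfolding e_def Ak_def using j1 by (simp add: add_divide_distrib abs_divide)
      finally show ?thesis by simp
    qed
    show "(\<lambda>n. h n \<omega>) \<longlonglongrightarrow> 0"
    proof (rule tendsto_sandwich[OF _ _ tendsto_const])
      show "eventually (\<lambda>n. 0 \<le> h n \<omega>) sequentially" by (simp add: h_nonneg)
      show "eventually (\<lambda>n. h n \<omega> \<le> C0 / real n + e (jj n)) sequentially"
        using eventually_ge_at_top[of N1] by (rule eventually_mono) (rule upper)
      show "(\<lambda>n. C0 / real n + e (jj n)) \<longlonglongrightarrow> 0" using tendsto_add[OF c0 ejj] by simp
    qed
  qed
qed

definition "pos n i = (if A n = {} then 0 else sum_list (take i (zs @ an n)))"
definition "Sb n \<omega> = (\<Sum>i<n. Phi (T (pos n i) \<omega>)) / real n"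

lemma pos_G: "pos n i \<in> G"
proof (cases "A n = {}")
  case True then show ?thesis by (simp add: pos_def gen_zero)
next
  case False
  then have "set (an n) \<subseteq> R" using A_props(2)[OF an_in] by blast
  then show ?thesis using take_sum_G[OF zs(1)] False by (simp add: pos_def)
qed

lemma h_meas[measurable]: "h n \<in> borel_measurable M"
proof (cases "A n = {}")
  case True
  then have "h n = (\<lambda>\<omega>. 0)" by (auto simp: h_def)
  then show ?thesis by simp
next
  case False
  have a: "an n \<in> A n" by (rule an_in[OF False])
  have "integrable M (\<lambda>\<omega>. path_sum T F (\<omega>, zs) (an n))"
    by (rule path_sum_int[OF zs A_props(2)[OF a]])
  then have m: "(\<lambda>\<omega>. path_sum T F (\<omega>, zs) (an n)) \<in> borel_measurable M" by (rule borel_measurable_integrable)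
  have "h n = (\<lambda>\<omega>. \<bar>path_sum T F (\<omega>, zs) (an n)\<bar> / real n)" using False by (intro ext) (simp add: h_def)
  then show ?thesis using m by simp
qed

lemma h_le_Sb: "\<omega> \<in> space M \<Longrightarrow> h n \<omega> \<le> Sb n \<omega>"
proof (cases "A n = {}")
  case True
  assume om: "\<omega> \<in> space M"
  show ?thesis using True Phi_nonneg by (simp add: h_def Sb_def sum_nonneg)
next
  case False
  assume om: "\<omega> \<in> space M"
  have a: "an n \<in> A n" by (rule an_in[OF False])
  have "\<bar>path_sum T F (\<omega>, zs) (an n)\<bar> \<le> (\<Sum>i<length (an n). Phi (T (sum_list (take i (zs @ an n))) \<omega>))"
    by (rule path_sum_bound[OF zs A_props(2)[OF a] om])
  also have "\<dots> = (\<Sum>i<n. Phi (T (pos n i) \<omega>))" using False A_props(1)[OF a] by (simp add: pos_def)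
  finally show ?thesis using False by (simp add: h_def Sb_def divide_right_mono)
qed

lemma h_int: "integrable M (h n)"
proof (rule Bochner_Integration.integrable_bound[OF _ h_meas])
  show "integrable M (Sb n)"
    unfolding Sb_def by (intro integrable_divide Bochner_Integration.integrable_sum integrable_T[OF pos_G Phi_int])
  show "AE \<omega> in M. norm (h n \<omega>) \<le> norm (Sb n \<omega>)"
  proof (rule AE_I2)
    fix \<omega> assume om: "\<omega> \<in> space M"
    have "0 \<le> h n \<omega>" by (rule h_nonneg)
    moreover have "h n \<omega> \<le> Sb n \<omega>" by (rule h_le_Sb[OF om])
    ultimately show "norm (h n \<omega>) \<le> norm (Sb n \<omega>)" by simp
  qed
qed

lemma excess:
  assumes K: "0 \<le> K"
  shows "integral\<^sup>L M (h n) \<le> integral\<^sup>L M (\<lambda>\<omega>. min (h n \<omega>) K) + integral\<^sup>L M (\<lambda>\<omega>. max (Phi \<omega> - K) 0)"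
proof -
  define D where "D \<omega> = (\<Sum>i<n. max (Phi (T (pos n i) \<omega>) - K) 0) / real n" for \<omega>
  have PhiK: "integrable M (\<lambda>\<omega>. max (Phi \<omega> - K) 0)"
    using Phi_int by (intro integrable_max Bochner_Integration.integrable_diff) auto
  have PhiKm: "(\<lambda>\<omega>. max (Phi \<omega> - K) 0) \<in> borel_measurable M" using borel_measurable_integrable[OF PhiK] .
  have Dint: "integrable M D"
    unfolding D_def by (intro integrable_divide Bochner_Integration.integrable_sum integrable_T[OF pos_G PhiK])
  have minint: "integrable M (\<lambda>\<omega>. min (h n \<omega>) K)"
    using h_int by (intro integrable_min) auto
  have pw: "h n \<omega> \<le> min (h n \<omega>) K + D \<omega>" if om: "\<omega> \<in> space M" for \<omega>
  proof (cases "n = 0")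
    case True then show ?thesis using K by (simp add: h_def D_def)
  next
    case False
    have "h n \<omega> - K \<le> Sb n \<omega> - K" using h_le_Sb[OF om] by simp
    also have "\<dots> = (\<Sum>i<n. Phi (T (pos n i) \<omega>) - K) / real n"
      using False by (simp add: Sb_def sum_subtractf field_simps)
    also have "\<dots> \<le> D \<omega>" unfolding D_def by (intro divide_right_mono sum_mono) auto
    finally have 1: "h n \<omega> - K \<le> D \<omega>" .
    have "0 \<le> D \<omega>" unfolding D_def by (intro divide_nonneg_nonneg sum_nonneg) auto
    then show ?thesis using 1 by (simp add: min_def)
  qed
  have "integral\<^sup>L M (h n) \<le> integral\<^sup>L M (\<lambda>\<omega>. min (h n \<omega>) K + D \<omega>)"
    by (rule integral_mono[OF h_int Bochner_Integration.integrable_add[OF minint Dint] pw])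
  also have "\<dots> = integral\<^sup>L M (\<lambda>\<omega>. min (h n \<omega>) K) + integral\<^sup>L M D"
    by (rule Bochner_Integration.integral_add[OF minint Dint])
  also have "integral\<^sup>L M D = (\<Sum>i<n. integral\<^sup>L M (\<lambda>\<omega>. max (Phi (T (pos n i) \<omega>) - K) 0)) / real n"
    unfolding D_def using integrable_T[OF pos_G PhiK]
    by (simp add: Bochner_Integration.integral_sum)
  also have "\<dots> = real n * integral\<^sup>L M (\<lambda>\<omega>. max (Phi \<omega> - K) 0) / real n"
    using integral_T[OF pos_G PhiKm] by simp
  also have "\<dots> \<le> integral\<^sup>L M (\<lambda>\<omega>. max (Phi \<omega> - K) 0)"
    by (cases "n = 0") (auto intro: integral_nonneg_AE)
  finally show ?thesis by simp
qed

lemma h_L1: "(\<lambda>n. integral\<^sup>L M (h n)) \<longlonglongrightarrow> 0"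
proof -
  have Dlim: "(\<lambda>m. integral\<^sup>L M (\<lambda>\<omega>. max (Phi \<omega> - real m) 0)) \<longlonglongrightarrow> integral\<^sup>L M (\<lambda>\<omega>. 0::real)"
  proof (rule integral_dominated_convergence[where w=Phi])
    show "(\<lambda>\<omega>. 0::real) \<in> borel_measurable M" by simp
    show "(\<lambda>\<omega>. max (Phi \<omega> - real m) 0) \<in> borel_measurable M" for m
      using borel_measurable_integrable[OF Phi_int] by measurable
    show "integrable M Phi" by (rule Phi_int)
    show "AE \<omega> in M. (\<lambda>m. max (Phi \<omega> - real m) 0) \<longlonglongrightarrow> 0"
    proof (intro AE_I2 tendsto_eventually)
      fix \<omega>
      obtain N :: nat where N: "Phi \<omega> \<le> real N" using real_arch_simple by blast
      show "eventually (\<lambda>m. max (Phi \<omega> - real m) 0 = 0) sequentially"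
        using eventually_ge_at_top[of N]
      proof (rule eventually_mono)
        fix m assume "N \<le> m"
        then have "real N \<le> real m" by simp
        then show "max (Phi \<omega> - real m) 0 = 0" using N by simp
      qed
    qed
    show "AE \<omega> in M. norm (max (Phi \<omega> - real m) 0) \<le> Phi \<omega>" for m
      using Phi_nonneg by (intro AE_I2) auto
  qed
  show ?thesis
  proof (rule order_tendstoI)
    fix a :: real assume "a < 0"
    then show "eventually (\<lambda>n. a < integral\<^sup>L M (h n)) sequentially"
      using h_nonneg by (intro always_eventually allI) (metis integral_nonneg_AE AE_I2 less_le_trans)
  next
    fix a :: real assume a: "0 < a"
    have "eventually (\<lambda>m. integral\<^sup>L M (\<lambda>\<omega>. max (Phi \<omega> - real m) 0) < a / 2) sequentially"
      using order_tendstoD(2)[OF Dlim, of "a / 2"] a by simp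
    then obtain m where m: "integral\<^sup>L M (\<lambda>\<omega>. max (Phi \<omega> - real m) 0) < a / 2"
      by (auto dest: eventually_happens)
    have Mlim: "(\<lambda>n. integral\<^sup>L M (\<lambda>\<omega>. min (h n \<omega>) (real m))) \<longlonglongrightarrow> integral\<^sup>L M (\<lambda>\<omega>. min 0 (real m))"
    proof (rule integral_dominated_convergence[where w="\<lambda>\<omega>. real m"])
      show "(\<lambda>\<omega>. min 0 (real m)) \<in> borel_measurable M" by simp
      show "(\<lambda>\<omega>. min (h n \<omega>) (real m)) \<in> borel_measurable M" for n by measurable
      show "integrable M (\<lambda>\<omega>. real m)" by simp
      show "AE \<omega> in M. (\<lambda>n. min (h n \<omega>) (real m)) \<longlonglongrightarrow> min 0 (real m)"
        using h_ae by eventually_elim (intro tendsto_min tendsto_const)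
      show "AE \<omega> in M. norm (min (h n \<omega>) (real m)) \<le> real m" for n
        using h_nonneg by (intro AE_I2) auto
    qed
    then have "eventually (\<lambda>n. integral\<^sup>L M (\<lambda>\<omega>. min (h n \<omega>) (real m)) < a / 2) sequentially"
      using a by (intro order_tendstoD(2)) auto
    then show "eventually (\<lambda>n. integral\<^sup>L M (h n) < a) sequentially"
    proof (rule eventually_mono)
      fix n assume "integral\<^sup>L M (\<lambda>\<omega>. min (h n \<omega>) (real m)) < a / 2"
      then show "integral\<^sup>L M (h n) < a" using excess[of "real m" n] m by simp
    qed
  qed
qed

end

lemma vec_of_int_mult: "vec_of_int ((of_nat j :: int^'d) * x) = real j *\<^sub>R vec_of_int x"
  by (simp add: vec_eq_iff vec_of_int_def of_nat_index)

lemma vec_of_int_inj: "vec_of_int (x :: int^'d) = vec_of_int y \<Longrightarrow> x = y"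
  by (simp add: vec_eq_iff vec_of_int_def)

theorem lemma2p9:
  fixes M :: "'a measure" and R :: "(int ^ 'd) set" and T :: "int ^ 'd \<Rightarrow> 'a \<Rightarrow> 'a"
    and l :: nat and F :: "'a \<times> (int ^ 'd) list \<Rightarrow> int ^ 'd \<Rightarrow> real"
    and \<xi> :: "real ^ 'd" and b :: nat and xhat :: "nat \<Rightarrow> int ^ 'd"
    and zs zbar :: "(int ^ 'd) list"
  assumes finR: "finite R"
    and sys: "ergodic_system M R T"
    and K: "classK M R T l F"
    and rat: "rat_vec \<xi>"
    and inU: "\<xi> \<in> convex hull (vec_of_int ` R)"
    and b_pos: "b \<ge> 1"
    and b_D: "of_nat b *\<^sub>R \<xi> \<in> vec_of_int ` Dn R b"
    and xhat0: "xhat 0 = 0"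
    and xhat_step: "\<And>n. xhat (Suc n) - xhat n \<in> R"
    and xhat_b: "\<And>j. vec_of_int (xhat (j * b)) = of_nat (j * b) *\<^sub>R \<xi>"
    and zs: "set zs \<subseteq> R" "length zs = l"
    and zbar: "set zbar \<subseteq> R" "length zbar = l"
  shows "(\<lambda>n. \<integral>\<^sup>+ \<omega>. ennreal (max_avg R l T F xhat zs zbar n \<omega>) \<partial>M) \<longlonglongrightarrow> 0 \<and>
         (AE \<omega> in M. (\<lambda>n. max_avg R l T F xhat zs zbar n \<omega>) \<longlonglongrightarrow> 0)"
proof -
  obtain dd where dd: "dd \<in> Dn R b" and bxi: "of_nat b *\<^sub>R \<xi> = vec_of_int dd" using b_D by blast
  obtain c where c: "length c = b" "set c \<subseteq> R" "dd = sum_list c" using dd unfolding Dn_def by blast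
  interpret E: erg M R T by unfold_locales (rule sys, rule finR)
  interpret KS: kset M R T l F by unfold_locales (rule K)
  interpret B: blk M R T l F b c by unfold_locales (use b_pos c in auto)
  have xb: "xhat (j * b) = of_nat j * B.v" for j
  proof (rule vec_of_int_inj)
    have "vec_of_int (xhat (j * b)) = real j *\<^sub>R (of_nat b *\<^sub>R \<xi>)"
      using xhat_b[of j] by (simp add: scaleR_scaleR)
    also have "\<dots> = vec_of_int (of_nat j * B.v)" unfolding bxi vec_of_int_mult B.v_def c(3) ..
    finally show "vec_of_int (xhat (j * b)) = vec_of_int (of_nat j * B.v)" .
  qed
  interpret FI: fin M R T l F b c xhat zs zbar
    by unfold_locales (use xhat_step xb zs zbar in auto)
  have eqh: "AE \<omega> in M. \<forall>n. max_avg R l T F xhat zs zbar n \<omega> = FI.h n \<omega>"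
    using eventually_conj[OF AE_space FI.AE_coc] by (rule eventually_mono) (simp add: FI.max_avg_h)
  have L1: "(\<lambda>n. \<integral>\<^sup>+ \<omega>. ennreal (max_avg R l T F xhat zs zbar n \<omega>) \<partial>M) \<longlonglongrightarrow> 0"
  proof -
    have "(\<integral>\<^sup>+ \<omega>. ennreal (max_avg R l T F xhat zs zbar n \<omega>) \<partial>M) = ennreal (integral\<^sup>L M (FI.h n))" for n
    proof -
      have "(\<integral>\<^sup>+ \<omega>. ennreal (max_avg R l T F xhat zs zbar n \<omega>) \<partial>M) = (\<integral>\<^sup>+ \<omega>. ennreal (FI.h n \<omega>) \<partial>M)"
        using eqh by (intro nn_integral_cong_AE) (rule eventually_mono, auto)
      also have "\<dots> = ennreal (integral\<^sup>L M (FI.h n))"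
        by (rule nn_integral_eq_integral[OF FI.h_int]) (simp add: FI.h_nonneg)
      finally show ?thesis .
    qed
    moreover have "(\<lambda>n. ennreal (integral\<^sup>L M (FI.h n))) \<longlonglongrightarrow> ennreal 0"
      by (rule tendsto_ennrealI[OF FI.h_L1])
    ultimately show ?thesis by simp
  qed
  have AEc: "AE \<omega> in M. (\<lambda>n. max_avg R l T F xhat zs zbar n \<omega>) \<longlonglongrightarrow> 0"
    using eventually_conj[OF eqh FI.h_ae] by (rule eventually_mono) simp
  show ?thesis using L1 AEc by simp
qed


end
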